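(* For every semistandard tableau $\mathbf m\in B(k,n,d)$, $\varphi(\mathrm{prom}(\mathbf m))=\mathrm{prom}(\varphi(\mathbf m))$.
   Context: Fix $1\le k<n$, $d\ge1$. For $p\in\{k,n-k\}$, $B(p,n,d)$ is the set of semistandard tableaux of rectangular shape with $p$ rows and $d$ columns and entries in $[n]$ (strictly increasing down columns, weakly increasing along rows); such a tableau is identified with the monomial $\prod_{i=1}^d[\mathbf a^{(i)}]$ in Plücker variables, $\mathbf a^{(i)}$ the set of entries of column $i$, so $\mathbf a^{(1)}\le\dots\le\mathbf a^{(d)}$ componentwise. $\varphi:B(k,n,d)\to B(n-k,n,d)$ sends $\prod_i[\mathbf a^{(i)}]$ to $\prod_i[[n]\setminus\mathbf a^{(i)}]$, i.e. the tableau whose columns, from left to right, are $[n]\setminus\mathbf a^{(d)},\dots,[n]\setminus\mathbf a^{(1)}$. Promotion $\mathrm{prom}$ on $B(p,n,d)$: if no entry equals $n$, add $1$ to all entries; otherwise replace each entry $n$ by an empty cell $\bullet$ and perform reverse jeu de taquin slides (an empty cell exchanges with its upper neighbor $c$ if $b\le c$ or the left neighbor $b$ does not exist, and with its left neighbor $b$ if $b>c$ or $c$ does not exist) until the empty cells form a top-left justified shape, then fill them with $0$ and add $1$ to all entries. *)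

theory Defs
  imports Main
begin

text \<open>A p x d tableau is a function T :: nat => nat => nat; T i j is the entry in
row i (0-based, top row 0) and column j (0-based, leftmost column 0).
Only the values on the box i < p, j < d matter.\<close>

definition semistandard :: "nat \<Rightarrow> nat \<Rightarrow> nat \<Rightarrow> (nat \<Rightarrow> nat \<Rightarrow> nat) \<Rightarrow> bool" where
  "semistandard p n d T \<longleftrightarrow>
     (\<forall>i<p. \<forall>j<d. T i j \<in> {1..n}) \<and>
     (\<forall>i j. i + 1 < p \<longrightarrow> j < d \<longrightarrow> T i j < T (i+1) j) \<and>
     (\<forall>i j. i < p \<longrightarrow> j + 1 < d \<longrightarrow> T i j \<le> T i (j+1))"

definition col_set :: "nat \<Rightarrow> (nat \<Rightarrow> nat \<Rightarrow> nat) \<Rightarrow> nat \<Rightarrow> nat set" where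
  "col_set p T j = {T r j | r. r < p}"

definition phi :: "nat \<Rightarrow> nat \<Rightarrow> nat \<Rightarrow> (nat \<Rightarrow> nat \<Rightarrow> nat) \<Rightarrow> (nat \<Rightarrow> nat \<Rightarrow> nat)" where
  "phi k n d T = (\<lambda>i j. if i < n - k \<and> j < d
      then sorted_list_of_set ({1..n} - col_set k T (d - 1 - j)) ! i else 0)"

text \<open>Empty cells are represented by the value 0 (all genuine entries are >= 1).
Swap the contents of two cells.\<close>
definition swap_cells :: "(nat \<Rightarrow> nat \<Rightarrow> nat) \<Rightarrow> nat \<Rightarrow> nat \<Rightarrow> nat \<Rightarrow> nat \<Rightarrow> (nat \<Rightarrow> nat \<Rightarrow> nat)" where
  "swap_cells T a b c e = (\<lambda>x y. if (x, y) = (a, b) then T c e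
                                 else if (x, y) = (c, e) then T a b else T x y)"

definition up_move :: "(nat \<Rightarrow> nat \<Rightarrow> nat) \<Rightarrow> nat \<Rightarrow> nat \<Rightarrow> bool" where
  "up_move T i j \<longleftrightarrow> 0 < i \<and> 0 < T (i-1) j \<and> (j = 0 \<or> T i (j-1) \<le> T (i-1) j)"

definition left_move :: "(nat \<Rightarrow> nat \<Rightarrow> nat) \<Rightarrow> nat \<Rightarrow> nat \<Rightarrow> bool" where
  "left_move T i j \<longleftrightarrow> 0 < j \<and> 0 < T i (j-1) \<and> (i = 0 \<or> T i (j-1) > T (i-1) j)"

function slide :: "(nat \<Rightarrow> nat \<Rightarrow> nat) \<Rightarrow> nat \<Rightarrow> nat \<Rightarrow> (nat \<Rightarrow> nat \<Rightarrow> nat)" where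
  "slide T i j =
     (if up_move T i j then slide (swap_cells T i j (i-1) j) (i-1) j
      else if left_move T i j then slide (swap_cells T i j i (j-1)) i (j-1)
      else T)"
  by auto
termination
  by (relation "measure (\<lambda>(T, i, j). i + j)") (auto simp: up_move_def left_move_def)

text \<open>The entries equal to n lie in the
bottom row (row p-1); they are replaced by empty cells, and reverse jeu de taquin slides
are performed into these empty cells one at a time, from left to right (the leftmost
empty cell is the only one that can be slid into first; each slide only moves cells
weakly up-left of it).\<close>
definition prom :: "nat \<Rightarrow> nat \<Rightarrow> nat \<Rightarrow> (nat \<Rightarrow> nat \<Rightarrow> nat) \<Rightarrow> (nat \<Rightarrow> nat \<Rightarrow> nat)" where
  "prom p n d T =
     (let T0 = (\<lambda>i j. if i < p \<and> j < d \<and> T i j = n then 0 else T i j);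
          S = foldl (\<lambda>S j. if T (p-1) j = n then slide S (p-1) j else S) T0 [0..<d]
      in (\<lambda>i j. if i < p \<and> j < d then S i j + 1 else 0))"

end

theory Submission
  imports Defs
begin


definition brf :: "nat set \<Rightarrow> nat set \<Rightarrow> nat \<Rightarrow> int" where
  "brf L C x = int (card {y\<in>L. x \<le> y}) - int (card {y\<in>C. x \<le> y})"

definition Sop_cond :: "nat set \<Rightarrow> nat set \<Rightarrow> bool" where
  "Sop_cond L C \<longleftrightarrow> 0 \<in> C \<and> 0 \<notin> L \<and> (\<exists>x. 0 < brf (L - {0}) (C - {0}) x)"

definition Sop_b :: "nat set \<Rightarrow> nat set \<Rightarrow> nat" where
  "Sop_b L C = (GREATEST x. 0 < brf (L - {0}) (C - {0}) x)"

definition Sop :: "nat \<Rightarrow> (nat \<Rightarrow> nat set) \<Rightarrow> (nat \<Rightarrow> nat set)" where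
  "Sop c A = (if Sop_cond (A (c-1)) (A c)
     then A(c-1 := insert 0 (A (c-1) - {Sop_b (A (c-1)) (A c)}),
            c := insert (Sop_b (A (c-1)) (A c)) (A c - {0}))
     else A)"

definition run :: "nat list \<Rightarrow> (nat \<Rightarrow> nat set) \<Rightarrow> (nat \<Rightarrow> nat set)" where
  "run w A = foldl (\<lambda>A c. Sop c A) A w"

lemma run_Nil[simp]: "run [] A = A" by (simp add: run_def)
lemma run_Cons[simp]: "run (c # w) A = run w (Sop c A)" by (simp add: run_def)
lemma run_append[simp]: "run (u @ w) A = run w (run u A)" by (simp add: run_def)

lemma Sop_other: "j \<noteq> c - 1 \<Longrightarrow> j \<noteq> c \<Longrightarrow> Sop c A j = A j"
  by (simp add: Sop_def)

lemma Sop_local: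
  assumes "A (c-1) = B (c-1)" "A c = B c" "j = c - 1 \<or> j = c"
  shows "Sop c A j = Sop c B j"
  using assms by (auto simp: Sop_def)

lemma Sop_comm:
  assumes "c' + 2 \<le> c"
  shows "Sop c (Sop c' A) = Sop c' (Sop c A)"
proof
  fix j
  show "Sop c (Sop c' A) j = Sop c' (Sop c A) j"
  proof (cases "j = c - 1 \<or> j = c")
    case True
    have "Sop c (Sop c' A) j = Sop c A j"
      by (rule Sop_local) (use assms True in \<open>auto intro!: Sop_other\<close>)
    moreover have "Sop c' (Sop c A) j = Sop c A j"
      using assms True by (intro Sop_other) auto
    ultimately show ?thesis by simp
  next
    case False
    note F = False
    show ?thesis
    proof (cases "j = c' - 1 \<or> j = c'")
      case True
      have "Sop c' (Sop c A) j = Sop c' A j"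
        by (rule Sop_local) (use assms True in \<open>auto intro!: Sop_other\<close>)
      moreover have "Sop c (Sop c' A) j = Sop c' A j"
        using assms F by (intro Sop_other) auto
      ultimately show ?thesis by simp
    next
      case False
      then show ?thesis using F by (simp add: Sop_other)
    qed
  qed
qed

definition commutes :: "nat \<Rightarrow> nat \<Rightarrow> bool" where
  "commutes a b \<longleftrightarrow> (\<forall>A. Sop a (Sop b A) = Sop b (Sop a A))"

lemma commutes_dist: "a + 2 \<le> b \<or> b + 2 \<le> a \<Longrightarrow> commutes a b"
  unfolding commutes_def using Sop_comm by metis

lemma run_swap_last: "\<forall>c\<in>set w. commutes x c \<Longrightarrow> run (x # w) A = run (w @ [x]) A"
proof (induction w arbitrary: A)
  case Nil then show ?case by simp
next
  case (Cons c w)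
  have "run (x # c # w) A = run w (Sop c (Sop x A))"
    by simp
  also have "\<dots> = run w (Sop x (Sop c A))"
    using Cons.prems by (simp add: commutes_def)
  also have "\<dots> = run (x # w) (Sop c A)" by simp
  also have "\<dots> = run (w @ [x]) (Sop c A)" using Cons by simp
  finally show ?case by simp
qed

lemma run_interleave:
  assumes "\<forall>i j. i < j \<longrightarrow> j < length us \<longrightarrow> (\<forall>c \<in> set (xs (us!j)). commutes (y (us!i)) c)"
  shows "run (concat (map (\<lambda>u. xs u @ [y u]) us)) A = run (concat (map xs us) @ map y us) A"
  using assms
proof (induction us arbitrary: A)
  case Nil then show ?case by simp
next
  case (Cons u us)
  have h1: "\<forall>i j. i < j \<longrightarrow> j < length us \<longrightarrow> (\<forall>c \<in> set (xs (us!j)). commutes (y (us!i)) c)"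
  proof (intro allI impI)
    fix i j assume "i < j" "j < length us"
    then show "\<forall>c \<in> set (xs (us!j)). commutes (y (us!i)) c"
      using Cons.prems[rule_format, of "Suc i" "Suc j"] by simp
  qed
  have h2: "\<forall>c\<in>set (concat (map xs us)). commutes (y u) c"
  proof
    fix c assume "c \<in> set (concat (map xs us))"
    then obtain v where "v \<in> set us" "c \<in> set (xs v)" by auto
    then obtain j where "j < length us" "c \<in> set (xs (us!j))"
      by (metis in_set_conv_nth)
    then show "commutes (y u) c" using Cons.prems[rule_format, of 0 "Suc j"] by simp
  qed
  have "run (concat (map (\<lambda>u. xs u @ [y u]) (u # us))) A
      = run (concat (map (\<lambda>u. xs u @ [y u]) us)) (Sop (y u) (run (xs u) A))" by simp
  also have "\<dots> = run (concat (map xs us) @ map y us) (Sop (y u) (run (xs u) A))"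
    using Cons.IH[OF h1] by simp
  also have "\<dots> = run (map y us) (run (y u # concat (map xs us)) (run (xs u) A))" by simp
  also have "\<dots> = run (map y us) (run (concat (map xs us) @ [y u]) (run (xs u) A))"
    using run_swap_last[OF h2] by simp
  finally show ?case by simp
qed

definition rowmaj :: "nat \<Rightarrow> nat \<Rightarrow> nat \<Rightarrow> nat list" where
  "rowmaj R s r = concat (map (\<lambda>t. map (\<lambda>u. R - t + u) [0..<s]) [0..<r])"
definition colmaj :: "nat \<Rightarrow> nat \<Rightarrow> nat \<Rightarrow> nat list" where
  "colmaj R s r = concat (map (\<lambda>u. map (\<lambda>t. R - t + u) [0..<r]) [0..<s])"

lemma grid_reorder: "r \<le> R \<Longrightarrow> run (colmaj R s r) A = run (rowmaj R s r) A"
proof (induction r arbitrary: A)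
  case 0
  have "colmaj R s 0 = []" by (induction s) (auto simp: colmaj_def)
  then show ?case by (simp add: rowmaj_def)
next
  case (Suc r)
  have "colmaj R s (Suc r) = concat (map (\<lambda>u. map (\<lambda>t. R - t + u) [0..<r] @ [R - r + u]) [0..<s])"
    by (simp add: colmaj_def)
  moreover have "\<forall>i j. i < j \<longrightarrow> j < s \<longrightarrow> (\<forall>x\<in>{0..<r}. commutes (R - r + i) (R - x + j))"
    using Suc.prems by (auto intro!: commutes_dist)
  ultimately have "run (colmaj R s (Suc r)) A
     = run (concat (map (\<lambda>u. map (\<lambda>t. R - t + u) [0..<r]) [0..<s]) @ map (\<lambda>u. R - r + u) [0..<s]) A"
    using run_interleave[of "[0..<s]" "\<lambda>u. map (\<lambda>t. R - t + u) [0..<r]" "\<lambda>u. R - r + u" A]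
    by simp
  also have "\<dots> = run (map (\<lambda>u. R - r + u) [0..<s]) (run (colmaj R s r) A)"
    by (simp add: colmaj_def)
  also have "\<dots> = run (map (\<lambda>u. R - r + u) [0..<s]) (run (rowmaj R s r) A)"
    using Suc by simp
  also have "\<dots> = run (rowmaj R s (Suc r)) A" by (simp add: rowmaj_def)
  finally show ?case .
qed

definition Rel :: "nat \<Rightarrow> nat \<Rightarrow> (nat \<Rightarrow> nat set) \<Rightarrow> (nat \<Rightarrow> nat set) \<Rightarrow> bool" where
  "Rel n d A B \<longleftrightarrow> (\<forall>j<d. A j \<subseteq> {0..<n} \<and> B j = {0..<n} - A (d-1-j))"

lemma brf_compl:
  assumes "L \<subseteq> {1..<n}" "C \<subseteq> {1..<n}"
  shows "brf ({1..<n} - C) ({1..<n} - L) x = brf L C x"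
proof -
  have e1: "{y \<in> {1..<n} - C. x \<le> y} = {y\<in>{1..<n}. x \<le> y} - {y\<in>C. x \<le> y}" by auto
  have e2: "{y \<in> {1..<n} - L. x \<le> y} = {y\<in>{1..<n}. x \<le> y} - {y\<in>L. x \<le> y}" by auto
  have fC: "finite {y\<in>C. x \<le> y}" using assms(2) by (auto intro: finite_subset)
  have fL: "finite {y\<in>L. x \<le> y}" using assms(1) by (auto intro: finite_subset)
  have s1: "{y\<in>C. x \<le> y} \<subseteq> {y\<in>{1..<n}. x \<le> y}" using assms by auto
  have s2: "{y\<in>L. x \<le> y} \<subseteq> {y\<in>{1..<n}. x \<le> y}" using assms by auto
  have c1: "card {y \<in> {1..<n} - C. x \<le> y} = card {y\<in>{1..<n}. x \<le> y} - card {y\<in>C. x \<le> y}"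
    unfolding e1 by (rule card_Diff_subset[OF fC s1])
  have c2: "card {y \<in> {1..<n} - L. x \<le> y} = card {y\<in>{1..<n}. x \<le> y} - card {y\<in>L. x \<le> y}"
    unfolding e2 by (rule card_Diff_subset[OF fL s2])
  have fin: "finite {y\<in>{1..<n}. x \<le> y}" by auto
  have l1: "card {y\<in>C. x \<le> y} \<le> card {y\<in>{1..<n}. x \<le> y}" by (rule card_mono[OF fin s1])
  have l2: "card {y\<in>L. x \<le> y} \<le> card {y\<in>{1..<n}. x \<le> y}" by (rule card_mono[OF fin s2])
  show ?thesis unfolding brf_def c1 c2 using l1 l2 by simp
qed

lemma brf_0: "0 \<notin> L \<Longrightarrow> 0 \<notin> C \<Longrightarrow> brf L C 0 = brf L C 1"
proof -
  assume "0 \<notin> L" "0 \<notin> C"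
  then have "{y\<in>L. 0 \<le> y} = {y\<in>L. 1 \<le> y}" "{y\<in>C. 0 \<le> y} = {y\<in>C. 1 \<le> y}"
    by (auto simp: Suc_le_eq) (metis gr0I)+
  then show ?thesis by (simp add: brf_def)
qed

lemma brf_big: "L \<subseteq> {..<n} \<Longrightarrow> C \<subseteq> {..<n} \<Longrightarrow> n \<le> x \<Longrightarrow> brf L C x = 0"
proof -
  assume "L \<subseteq> {..<n}" "C \<subseteq> {..<n}" "n \<le> x"
  then have "{y\<in>L. x \<le> y} = {}" "{y\<in>C. x \<le> y} = {}" by auto
  then show ?thesis unfolding brf_def by (metis card.empty diff_self)
qed

lemma Sop_b_props:
  assumes "L \<subseteq> {0..<n}" "C \<subseteq> {0..<n}" "\<exists>x. 0 < brf (L - {0}) (C - {0}) x"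
  shows "1 \<le> Sop_b L C" "Sop_b L C < n" "0 < brf (L - {0}) (C - {0}) (Sop_b L C)"
    "\<And>y. 0 < brf (L - {0}) (C - {0}) y \<Longrightarrow> y \<le> Sop_b L C"
proof -
  let ?P = "\<lambda>x. 0 < brf (L - {0}) (C - {0}) x"
  obtain x where x: "?P x" using assms(3) by blast
  have bnd: "\<forall>y. ?P y \<longrightarrow> y \<le> n"
  proof (intro allI impI)
    fix y assume "?P y"
    show "y \<le> n"
    proof (rule ccontr)
      assume "\<not> y \<le> n"
      then have "brf (L - {0}) (C - {0}) y = 0" using assms(1,2) by (intro brf_big[of _ n]) auto
      then show False using \<open>?P y\<close> by simp
    qed
  qed
  show P: "?P (Sop_b L C)" unfolding Sop_b_def by (rule GreatestI_nat[where P="?P", OF x]) (use bnd in blast)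
  show le: "\<And>y. ?P y \<Longrightarrow> y \<le> Sop_b L C" unfolding Sop_b_def by (rule Greatest_le_nat[where P="?P"]) (use bnd in blast)+
  show "Sop_b L C < n"
  proof (rule ccontr)
    assume "\<not> Sop_b L C < n"
    then have "brf (L - {0}) (C - {0}) (Sop_b L C) = 0" using assms(1,2) by (intro brf_big[of _ n]) auto
    then show False using P by simp
  qed
  show "1 \<le> Sop_b L C"
  proof (cases "x = 0")
    case True
    then have "?P 1" using x brf_0[of "L - {0}" "C - {0}"] by simp
    then show ?thesis using le by blast
  next
    case False
    then show ?thesis using le[OF x] by simp
  qed
qed

lemma Rel_Sop:
  assumes R: "Rel n d A B" and c: "1 \<le> c" "c < d" and n: "0 < n"
  shows "Rel n d (Sop c A) (Sop (d-c) B)"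
proof -
  have i1: "d-c-1 < d" "d-1-(d-c-1) = c" "d - c < d" "d-1-(d-c) = c-1" using c by auto
  have "B (d-c-1) = {0..<n} - A (d-1-(d-c-1))"
    using R i1(1) unfolding Rel_def by blast
  then have BL: "B (d-c-1) = {0..<n} - A c" using i1(2) by simp
  have "B (d-c) = {0..<n} - A (d-1-(d-c))"
    using R i1(3) unfolding Rel_def by blast
  then have BC: "B (d-c) = {0..<n} - A (c-1)" using i1(4) by simp
  have Ac: "A c \<subseteq> {0..<n}" "A (c-1) \<subseteq> {0..<n}" using R c unfolding Rel_def by (meson less_imp_diff_less)+
  have e1: "B (d-c-1) - {0} = {1..<n} - (A c - {0})" unfolding BL by force
  have e2: "B (d-c) - {0} = {1..<n} - (A (c-1) - {0})" unfolding BC by force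
  have brfeq0: "brf (B (d-c-1) - {0}) (B (d-c) - {0}) x = brf (A (c-1) - {0}) (A c - {0}) x" for x
    unfolding e1 e2 by (rule brf_compl) (use Ac in force)+
  note brfeq = brfeq0
  have dc: "d - c - 1 = d - c - 1" "d - c - 1 \<noteq> d - c" using c by auto
  have conde: "Sop_cond (B (d-c-1)) (B (d-c)) \<longleftrightarrow> Sop_cond (A (c-1)) (A c)"
    unfolding Sop_cond_def brfeq using BL BC n by simp blast
  have beq: "Sop_b (B (d-c-1)) (B (d-c)) = Sop_b (A (c-1)) (A c)"
    unfolding Sop_b_def brfeq ..
  show ?thesis
  proof (cases "Sop_cond (A (c-1)) (A c)")
    case False
    then have "Sop c A = A" "Sop (d-c) B = B" using conde by (auto simp: Sop_def)
    then show ?thesis using R by simp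
  next
    case True
    let ?b = "Sop_b (A (c-1)) (A c)"
    have ex: "\<exists>x. 0 < brf (A (c-1) - {0}) (A c - {0}) x" using True unfolding Sop_cond_def by blast
    have bp: "1 \<le> ?b" "?b < n" using Sop_b_props[OF Ac(2) Ac(1) ex] by auto
    have SA: "Sop c A = A(c-1 := insert 0 (A (c-1) - {?b}), c := insert ?b (A c - {0}))"
      using True by (simp add: Sop_def)
    have SB: "Sop (d-c) B = B(d-c-1 := insert 0 (B (d-c-1) - {?b}), d-c := insert ?b (B (d-c) - {0}))"
      using True conde beq by (simp add: Sop_def)
    have c1: "c - 1 \<noteq> c" using c by simp
    show ?thesis unfolding Rel_def
    proof (intro allI impI conjI)
      fix j assume j: "j < d"
      have Aj: "A j \<subseteq> {0..<n}" using R j unfolding Rel_def by blast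
      show "Sop c A j \<subseteq> {0..<n}" unfolding SA using Aj bp n Ac by auto
      show "Sop (d - c) B j = {0..<n} - Sop c A (d - 1 - j)"
      proof (cases "j = d - c - 1")
        case True
        then have "d - 1 - j = c" using c by simp
        then have "Sop c A (d - 1 - j) = insert ?b (A c - {0})" unfolding SA by simp
        moreover have "Sop (d-c) B j = insert 0 (B (d-c-1) - {?b})" unfolding SB using True dc by simp
        ultimately show ?thesis using BL bp n by auto
      next
        case F1: False
        show ?thesis
        proof (cases "j = d - c")
          case True
          then have "d - 1 - j = c - 1" using c by simp
          then have "Sop c A (d - 1 - j) = insert 0 (A (c-1) - {?b})" unfolding SA using c1 by simp
          moreover have "Sop (d-c) B j = insert ?b (B (d-c) - {0})" unfolding SB using True by simp
          ultimately show ?thesis using BC bp n by auto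
        next
          case False
          then have "d - 1 - j \<noteq> c" "d - 1 - j \<noteq> c - 1" using F1 j c by auto
          then have "Sop c A (d - 1 - j) = A (d-1-j)" unfolding SA by simp
          moreover have "Sop (d-c) B j = B j" unfolding SB using F1 False by simp
          moreover have "B j = {0..<n} - A (d-1-j)" using R j unfolding Rel_def by blast
          ultimately show ?thesis by simp
        qed
      qed
    qed
  qed
qed

lemma Rel_run:
  assumes "Rel n d A B" "\<forall>c\<in>set w. 1 \<le> c \<and> c < d" "0 < n"
  shows "Rel n d (run w A) (run (map (\<lambda>c. d - c) w) B)"
  using assms
proof (induction w arbitrary: A B)
  case Nil then show ?case by simp
next
  case (Cons a w)
  have "Rel n d (Sop a A) (Sop (d-a) B)" using Cons.prems by (intro Rel_Sop) auto
  then show ?case using Cons.IH[of "Sop a A" "Sop (d-a) B"] Cons.prems by simp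
qed




declare slide.simps[simp del]

lemma card_img_filter:
  assumes "inj_on g I"
  shows "card {y \<in> g ` I. P y} = card {i \<in> I. P (g i)}"
proof -
  have "{y \<in> g ` I. P y} = g ` {i \<in> I. P (g i)}" by auto
  moreover have "inj_on g {i \<in> I. P (g i)}" using assms by (rule inj_on_subset) auto
  ultimately show ?thesis by (simp add: card_image)
qed

lemma strict_inj_on:
  assumes "\<forall>i j. i < j \<longrightarrow> i \<in> I \<longrightarrow> j \<in> I \<longrightarrow> (g::nat\<Rightarrow>nat) i < g j"
  shows "inj_on g I"
proof (rule inj_onI)
  fix i j assume "i \<in> I" "j \<in> I" "g i = g j"
  then show "i = j" using assms by (metis less_irrefl nat_neq_iff)
qed

lemma bracket:
  fixes l u :: "nat \<Rightarrow> nat"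
  assumes eq: "e \<le> q" "q < p"
    and sl: "\<forall>i j. i < j \<longrightarrow> j < p \<longrightarrow> l i < l j"
    and su: "\<forall>i j. i < j \<longrightarrow> j < p \<longrightarrow> i \<noteq> q \<longrightarrow> j \<noteq> q \<longrightarrow> u i < u j"
    and cl: "\<forall>i. e < i \<longrightarrow> i \<le> q \<longrightarrow> l i \<le> u (i-1)"
    and rw: "\<forall>i. q < i \<longrightarrow> i < p \<longrightarrow> l i \<le> u i"
    and lf: "e = 0 \<or> u (e-1) < l e"
  shows "0 < brf (l ` {..<p}) (u ` ({..<p} - {q})) (l e)"
    and "\<And>x. l e < x \<Longrightarrow> brf (l ` {..<p}) (u ` ({..<p} - {q})) x \<le> 0"
proof -
  have il: "inj_on l {..<p}" by (rule strict_inj_on) (use sl in auto)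
  have iu: "inj_on u ({..<p} - {q})" by (rule strict_inj_on) (use su in auto)
  have cL: "card {y \<in> l ` {..<p}. x \<le> y} = card {i \<in> {..<p}. x \<le> l i}" for x
    by (rule card_img_filter[OF il])
  have cU: "card {y \<in> u ` ({..<p} - {q}). x \<le> y} = card {i \<in> {..<p} - {q}. x \<le> u i}" for x
    by (rule card_img_filter[OF iu])
  have ep: "e < p" using eq by simp
  {
    have "{i \<in> {..<p}. l e \<le> l i} = {e..<p}"
    proof (intro equalityI subsetI)
      fix i assume "i \<in> {i \<in> {..<p}. l e \<le> l i}"
      then have "i < p" "l e \<le> l i" by auto
      moreover have "e \<le> i"
      proof (rule ccontr)
        assume "\<not> e \<le> i"
        then have "l i < l e" using sl ep by simp
        then show False using \<open>l e \<le> l i\<close> by simp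
      qed
      ultimately show "i \<in> {e..<p}" by simp
    next
      fix i assume "i \<in> {e..<p}"
      then show "i \<in> {i \<in> {..<p}. l e \<le> l i}" using sl by (auto simp: le_less)
    qed
    then have c1: "card {i \<in> {..<p}. l e \<le> l i} = p - e" by simp
    have sub: "{i \<in> {..<p} - {q}. l e \<le> u i} \<subseteq> {e..<p} - {q}"
    proof
      fix i assume i: "i \<in> {i \<in> {..<p} - {q}. l e \<le> u i}"
      have "e \<le> i"
      proof (rule ccontr)
        assume "\<not> e \<le> i"
        then have ie: "i < e" by simp
        then have "e \<noteq> 0" by simp
        then have ul: "u (e-1) < l e" using lf by simp
        have "u i \<le> u (e-1)"
        proof (cases "i = e - 1")
          case True then show ?thesis by simp
        next
          case False
          then have "i < e - 1" using ie by simp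
          moreover have "e - 1 < p" "i \<noteq> q" "e - 1 \<noteq> q" using i eq ie by auto
          ultimately have "u i < u (e-1)" using su by blast
          then show ?thesis by simp
        qed
        then show False using ul i by simp
      qed
      then show "i \<in> {e..<p} - {q}" using i by auto
    qed
    have "card {i \<in> {..<p} - {q}. l e \<le> u i} \<le> card ({e..<p} - {q})"
      by (rule card_mono[OF _ sub]) simp
    also have "\<dots> = p - e - 1" using eq by simp
    finally have c2: "card {i \<in> {..<p} - {q}. l e \<le> u i} \<le> p - e - 1" .
    show "0 < brf (l ` {..<p}) (u ` ({..<p} - {q})) (l e)"
      unfolding brf_def cL cU c1 using c2 ep by linarith
  }
  fix x assume x: "l e < x"
  let ?A = "{i \<in> {..<p}. x \<le> l i}"
  let ?B = "{i \<in> {..<p} - {q}. x \<le> u i}"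
  let ?f = "\<lambda>i. if i \<le> q then i - 1 else i"
  have Asub: "?A \<subseteq> {e<..<p}"
  proof
    fix i assume i: "i \<in> ?A"
    have "e < i"
    proof (rule ccontr)
      assume "\<not> e < i"
      then have "i = e \<or> i < e" by auto
      then have "l i \<le> l e" using sl ep by (metis less_imp_le order_refl)
      then show False using i x by simp
    qed
    then show "i \<in> {e<..<p}" using i by auto
  qed
  have inj: "inj_on ?f ?A"
  proof (rule inj_onI)
    fix i j assume "i \<in> ?A" "j \<in> ?A" "?f i = ?f j"
    moreover have "e < i" "e < j" using Asub \<open>i \<in> ?A\<close> \<open>j \<in> ?A\<close> by auto
    ultimately show "i = j" by (auto split: if_splits)
  qed
  have img: "?f ` ?A \<subseteq> ?B"
  proof
    fix y assume "y \<in> ?f ` ?A"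
    then obtain i where i: "i \<in> ?A" "y = ?f i" by blast
    then have ei: "e < i" "i < p" using Asub by auto
    show "y \<in> ?B"
    proof (cases "i \<le> q")
      case True
      then have "l i \<le> u (i-1)" using cl ei by simp
      then show ?thesis using i True ei eq by auto
    next
      case False
      then have "l i \<le> u i" using rw ei by simp
      then show ?thesis using i False ei by auto
    qed
  qed
  have "card ?A \<le> card ?B"
    by (rule card_inj_on_le[OF inj img]) simp
  then show "brf (l ` {..<p}) (u ` ({..<p} - {q})) x \<le> 0"
    unfolding brf_def cL cU by simp
qed

definition shiftcol :: "(nat \<Rightarrow> nat \<Rightarrow> nat) \<Rightarrow> nat \<Rightarrow> nat \<Rightarrow> nat \<Rightarrow> (nat \<Rightarrow> nat \<Rightarrow> nat)" where
  "shiftcol X c e i = (\<lambda>a b. if b = c \<and> e \<le> a \<and> a \<le> i then (if a = e then 0 else X (a-1) c) else X a b)"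

lemma slide_up: "up_move T i j \<Longrightarrow> slide T i j = slide (swap_cells T i j (i-1) j) (i-1) j"
  by (subst slide.simps) simp

lemma slide_left: "\<not> up_move T i j \<Longrightarrow> left_move T i j \<Longrightarrow> slide T i j = slide (swap_cells T i j i (j-1)) i (j-1)"
  by (subst slide.simps) simp

lemma slide_stop: "\<not> up_move T i j \<Longrightarrow> \<not> left_move T i j \<Longrightarrow> slide T i j = T"
  by (subst slide.simps) simp

lemma climb:
  assumes "e \<le> i" "X i c = 0"
    "\<forall>i'. e < i' \<longrightarrow> i' \<le> i \<longrightarrow> 0 < X (i'-1) c \<and> (c = 0 \<or> X i' (c-1) \<le> X (i'-1) c)"
  shows "slide X i c = slide (shiftcol X c e i) e c"
  using assms
proof (induction "i - e" arbitrary: i X)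
  case 0
  then have "i = e" by simp
  moreover have "shiftcol X c e i = X" using 0 \<open>i = e\<close> by (intro ext) (auto simp: shiftcol_def)
  ultimately show ?case by simp
next
  case (Suc k)
  then have ie: "e < i" by simp
  have h: "0 < X (i-1) c" "c = 0 \<or> X i (c-1) \<le> X (i-1) c" using Suc.prems(3) ie by auto
  have up: "up_move X i c" unfolding up_move_def using h ie by auto
  let ?X = "swap_cells X i c (i-1) c"
  have s1: "slide X i c = slide ?X (i-1) c" by (rule slide_up[OF up])
  have k: "k = (i - 1) - e" using Suc.hyps by simp
  have p3: "\<forall>i'. e < i' \<longrightarrow> i' \<le> i - 1 \<longrightarrow> 0 < ?X (i'-1) c \<and> (c = 0 \<or> ?X i' (c-1) \<le> ?X (i'-1) c)"
  proof (intro allI impI)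
    fix i' assume a: "e < i'" "i' \<le> i - 1"
    have x1: "?X (i'-1) c = X (i'-1) c" using a ie by (auto simp: swap_cells_def)
    have x2: "c \<noteq> 0 \<Longrightarrow> ?X i' (c-1) = X i' (c-1)" by (auto simp: swap_cells_def)
    show "0 < ?X (i'-1) c \<and> (c = 0 \<or> ?X i' (c-1) \<le> ?X (i'-1) c)"
    proof -
      have "i' \<le> i" using a by simp
      then have "0 < X (i'-1) c \<and> (c = 0 \<or> X i' (c-1) \<le> X (i'-1) c)"
        using Suc.prems(3) a(1) by blast
      then show ?thesis using x1 x2 by (cases "c = 0") auto
    qed
  qed
  have x0: "?X (i-1) c = 0" using Suc.prems(2) by (simp add: swap_cells_def)
  have s2: "slide ?X (i-1) c = slide (shiftcol ?X c e (i-1)) e c"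
    by (rule Suc.hyps(1)[OF k _ x0 p3]) (use ie in simp)
  have "shiftcol ?X c e (i-1) = shiftcol X c e i"
  proof (intro ext)
    fix a b
    show "shiftcol ?X c e (i-1) a b = shiftcol X c e i a b"
    proof (cases "b = c")
      case False then show ?thesis by (simp add: shiftcol_def swap_cells_def)
    next
      case True
      consider "a < e" | "a = e" | "e < a \<and> a < i" | "a = i" | "i < a" using ie by linarith
      then show ?thesis
      proof cases
        case 1
        then have "a \<noteq> i - 1" "a \<noteq> i" using ie by auto
        then show ?thesis using 1 True ie by (simp add: shiftcol_def swap_cells_def)
      next
        case 2 then show ?thesis using True ie Suc.prems(2) by (auto simp: shiftcol_def swap_cells_def)
      next
        case 3 then show ?thesis using True ie Suc.prems(2) by (auto simp: shiftcol_def swap_cells_def)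
      next
        case 4 then show ?thesis using True ie Suc.prems(2) by (auto simp: shiftcol_def swap_cells_def)
      next
        case 5 then show ?thesis using True ie Suc.prems(2) by (auto simp: shiftcol_def swap_cells_def)
      qed
    qed
  qed
  then show ?case using s1 s2 by simp
qed




definition INV :: "nat \<Rightarrow> nat \<Rightarrow> nat \<Rightarrow> nat \<Rightarrow> nat \<Rightarrow> (nat \<Rightarrow> nat \<Rightarrow> nat) \<Rightarrow> bool" where
  "INV p n d j0 t S \<longleftrightarrow>
    (\<forall>i<p. \<forall>j<d. (S i j = 0 \<longleftrightarrow> (i = 0 \<and> j < t) \<or> (i = p - 1 \<and> j0 + t \<le> j))) \<and>
    (\<forall>i<p. \<forall>j<d. S i j < n) \<and>
    (\<forall>i j. i + 1 < p \<longrightarrow> j < d \<longrightarrow> S (i+1) j \<noteq> 0 \<longrightarrow> S i j < S (i+1) j) \<and>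
    (\<forall>i j. i < p \<longrightarrow> j + 1 < d \<longrightarrow> S i (j+1) \<noteq> 0 \<longrightarrow> S i j \<le> S i (j+1)) \<and>
    (0 < t \<longrightarrow> (\<exists>h. h (j0 + t - 1) = p - 1 \<and>
       (\<forall>c i. t - 1 \<le> c \<longrightarrow> c \<le> j0 + t - 1 \<longrightarrow> c + 1 < d \<longrightarrow> 0 < i \<longrightarrow> i \<le> h c \<longrightarrow>
          (c = t - 1 \<or> h (c - 1) < i) \<longrightarrow> S i c \<le> S (i-1) (c+1))))"

definition cnd :: "(nat \<Rightarrow> nat \<Rightarrow> nat) \<Rightarrow> nat \<Rightarrow> nat \<Rightarrow> bool" where
  "cnd S c e \<longleftrightarrow> e = 0 \<or> (0 < c \<and> S (e-1) c < S e (c-1))"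

definition exf :: "(nat \<Rightarrow> nat \<Rightarrow> nat) \<Rightarrow> nat \<Rightarrow> nat \<Rightarrow> nat" where
  "exf S c i = (GREATEST e. e \<le> i \<and> cnd S c e)"

lemma exf_props:
  shows "exf S c i \<le> i" "cnd S c (exf S c i)" "\<And>e. e \<le> i \<Longrightarrow> cnd S c e \<Longrightarrow> e \<le> exf S c i"
proof -
  have ex: "0 \<le> i \<and> cnd S c 0" by (simp add: cnd_def)
  have bnd: "\<forall>y. y \<le> i \<and> cnd S c y \<longrightarrow> y \<le> i" by simp
  have "exf S c i \<le> i \<and> cnd S c (exf S c i)"
    unfolding exf_def by (rule GreatestI_nat[where P="\<lambda>e. e \<le> i \<and> cnd S c e", OF ex]) (use bnd in blast)
  then show "exf S c i \<le> i" "cnd S c (exf S c i)" by auto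
  show "\<And>e. e \<le> i \<Longrightarrow> cnd S c e \<Longrightarrow> e \<le> exf S c i"
    unfolding exf_def by (rule Greatest_le_nat[where P="\<lambda>e. e \<le> i \<and> cnd S c e"]) (use bnd in blast)+
qed

fun inp :: "(nat \<Rightarrow> nat \<Rightarrow> nat) \<Rightarrow> nat \<Rightarrow> nat \<Rightarrow> nat \<Rightarrow> nat" where
  "inp S c0 q 0 = q"
| "inp S c0 q (Suc k) = exf S (c0 - k) (inp S c0 q k)"

lemma inp_le: "inp S c0 q k \<le> q"
  by (induction k) (auto intro: le_trans[OF exf_props(1)])

lemma col_strict_mono:
  assumes "\<forall>i. i + 1 < m \<longrightarrow> (g::nat\<Rightarrow>nat) i < g (i+1)" "i < j" "j < m"
  shows "g i < g j"
  using assms(2,3)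
proof (induction j)
  case 0 then show ?case by simp
next
  case (Suc j)
  then show ?case using assms(1) by (cases "i = j") (auto intro: less_trans)
qed

lemma shift_img:
  fixes e q p :: nat
  assumes "e \<le> q" "q < p"
  shows "(\<lambda>i. if i < e then g i else if i = e then v else if i \<le> q then g (i-1) else g i) ` {..<p}
       = insert v (g ` ({..<p} - {q}))"
proof -
  define f where "f = (\<lambda>i. if i < e then g i else if i = e then v else if i \<le> q then g (i-1) else g i)"
  have A: "f i \<in> insert v (g ` ({..<p} - {q}))" if i: "i < p" for i
  proof (cases "i < e")
    case True
    then have "i \<noteq> q" using assms(1) by (metis less_le_trans less_irrefl)
    moreover have "f i = g i" using True by (simp add: f_def)
    ultimately show ?thesis using i by auto
  next
    case F: False
    show ?thesis
    proof (cases "i = e")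
      case True then show ?thesis by (simp add: f_def)
    next
      case False
      show ?thesis
      proof (cases "i \<le> q")
        case True
        then have "f i = g (i-1)" using F False by (simp add: f_def)
        moreover have "i - 1 < p" "i - 1 \<noteq> q" using i F False True by auto
        ultimately show ?thesis by auto
      next
        case False
        then have "f i = g i" using F assms by (simp add: f_def)
        then show ?thesis using i False by auto
      qed
    qed
  qed
  have B: "y \<in> f ` {..<p}" if y: "y \<in> insert v (g ` ({..<p} - {q}))" for y
  proof (cases "y = v")
    case True
    then have "f e = y" by (simp add: f_def)
    moreover have "e < p" using assms by simp
    ultimately show ?thesis by (intro image_eqI[OF sym]) simp_all
  next
    case False
    then obtain i where i: "i < p" "i \<noteq> q" "y = g i" using y by blast
    show ?thesis
    proof (cases "i < e")
      case True
      then have "f i = y" using i by (simp add: f_def)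
      then show ?thesis using i by (intro image_eqI[OF sym]) simp_all
    next
      case F: False
      show ?thesis
      proof (cases "i < q")
        case True
        then have "f (i+1) = y" using i F by (simp add: f_def)
        moreover have "i + 1 < p" using True assms by simp
        ultimately show ?thesis by (intro image_eqI[OF sym]) simp_all
      next
        case False
        then have "f i = y" using i F assms by (simp add: f_def)
        then show ?thesis using i by (intro image_eqI[OF sym]) simp_all
      qed
    qed
  qed
  have "f ` {..<p} = insert v (g ` ({..<p} - {q}))"
  proof (intro equalityI subsetI)
    fix y assume "y \<in> f ` {..<p}"
    then obtain i where "i < p" "y = f i" by blast
    then show "y \<in> insert v (g ` ({..<p} - {q}))" using A by blast
  next
    fix y assume "y \<in> insert v (g ` ({..<p} - {q}))"
    then show "y \<in> f ` {..<p}" by (rule B)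
  qed
  then show ?thesis unfolding f_def .
qed

lemma col_set_img: "col_set p T j = (\<lambda>i. T i j) ` {..<p}"
  by (auto simp: col_set_def)




locale hole =
  fixes p n d j0 t :: nat and S :: "nat \<Rightarrow> nat \<Rightarrow> nat"
  assumes inv: "INV p n d j0 t S" and pp: "0 < p" and td: "j0 + t < d"
begin

definition inr :: "nat \<Rightarrow> nat" where "inr c = inp S (j0+t) (p-1) (j0+t-c)"
definition exr :: "nat \<Rightarrow> nat" where "exr c = exf S c (inr c)"
definition S' :: "nat \<Rightarrow> nat \<Rightarrow> nat" where
  "S' = (\<lambda>i j. if t \<le> j \<and> j \<le> j0+t then
      (if i < exr j then S i j else if i = exr j then (if j = t then 0 else S i (j-1))
       else if i \<le> inr j then S (i-1) j else S i j) else S i j)"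
definition X :: "nat \<Rightarrow> nat \<Rightarrow> nat \<Rightarrow> nat" where
  "X c = (\<lambda>i j. if c < j then S' i j else if j = c \<and> i = inr c then 0 else S i j)"

lemma Z: "i < p \<Longrightarrow> j < d \<Longrightarrow> S i j = 0 \<longleftrightarrow> (i = 0 \<and> j < t) \<or> (i = p - 1 \<and> j0 + t \<le> j)"
  using inv[unfolded INV_def, THEN conjunct1] by simp
lemma V: "i < p \<Longrightarrow> j < d \<Longrightarrow> S i j < n"
  using inv[unfolded INV_def, THEN conjunct2, THEN conjunct1] by simp
lemma CS: "i + 1 < p \<Longrightarrow> j < d \<Longrightarrow> S (i+1) j \<noteq> 0 \<Longrightarrow> S i j < S (i+1) j"
  using inv[unfolded INV_def, THEN conjunct2, THEN conjunct2, THEN conjunct1] by simp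
lemma RW: "i < p \<Longrightarrow> j + 1 < d \<Longrightarrow> S i (j+1) \<noteq> 0 \<Longrightarrow> S i j \<le> S i (j+1)"
  using inv[unfolded INV_def, THEN conjunct2, THEN conjunct2, THEN conjunct2, THEN conjunct1] by simp
lemma nz: "i < p \<Longrightarrow> t \<le> j \<Longrightarrow> j < d \<Longrightarrow> j < j0 + t \<or> i < p - 1 \<Longrightarrow> S i j \<noteq> 0"
  using Z[of i j] by auto

lemma inr_c0: "inr (j0+t) = p - 1" by (simp add: inr_def)
lemma inr_le: "inr c \<le> p - 1" unfolding inr_def by (rule inp_le)
lemma inr_step: "t < c \<Longrightarrow> c \<le> j0 + t \<Longrightarrow> inr (c-1) = exr c"
proof -
  assume a: "t < c" "c \<le> j0 + t"
  then have "j0 + t - (c - 1) = Suc (j0 + t - c)" by simp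
  moreover have "j0 + t - (j0 + t - c) = c" using a by simp
  ultimately show ?thesis unfolding inr_def exr_def by simp
qed
lemma exr_le: "exr c \<le> inr c" unfolding exr_def by (rule exf_props)
lemma cnd_exr: "cnd S c (exr c)" unfolding exr_def by (rule exf_props)
lemma notcnd: "exr c < e \<Longrightarrow> e \<le> inr c \<Longrightarrow> \<not> cnd S c e"
proof
  assume "exr c < e" "e \<le> inr c" "cnd S c e"
  then have "e \<le> exr c" unfolding exr_def by (intro exf_props(3))
  then show False using \<open>exr c < e\<close> by simp
qed
lemma climbc: "0 < c \<Longrightarrow> exr c < i \<Longrightarrow> i \<le> inr c \<Longrightarrow> S i (c-1) \<le> S (i-1) c"
  using notcnd[of c i] unfolding cnd_def by auto
lemma leftc: "0 < c \<Longrightarrow> exr c = 0 \<or> S (exr c - 1) c < S (exr c) (c-1)"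
  using cnd_exr[of c] unfolding cnd_def by auto

lemma exr_t: "exr t = 0"
proof (cases "t = 0")
  case True
  then show ?thesis using cnd_exr[of t] unfolding cnd_def by simp
next
  case False
  then obtain h where h0: "h (j0 + t - 1) = p - 1" and
    band: "\<forall>c i. t - 1 \<le> c \<longrightarrow> c \<le> j0 + t - 1 \<longrightarrow> c + 1 < d \<longrightarrow> 0 < i \<longrightarrow> i \<le> h c \<longrightarrow>
          (c = t - 1 \<or> h (c - 1) < i) \<longrightarrow> S i c \<le> S (i-1) (c+1)"
    using inv[unfolded INV_def, THEN conjunct2, THEN conjunct2, THEN conjunct2, THEN conjunct2] by blast
  have bnd: "k \<le> j0 \<Longrightarrow> inr (j0 + t - k) \<le> h (j0 + t - k - 1)" for k
  proof (induction k)
    case 0 then show ?case using h0 inr_c0 by simp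
  next
    case (Suc k)
    define c where "c = j0 + t - k"
    have c: "t < c" "c \<le> j0 + t" "j0 + t - Suc k = c - 1" "j0 + t - Suc k - 1 = c - 1 - 1"
      using Suc.prems False by (auto simp: c_def)
    have ih: "inr c \<le> h (c - 1)" using Suc c_def by simp
    have "exr c \<le> h (c - 1 - 1)"
    proof (rule ccontr)
      assume "\<not> exr c \<le> h (c - 1 - 1)"
      then have e: "h (c - 1 - 1) < exr c" by simp
      then have e0: "0 < exr c" by simp
      have lt: "S (exr c - 1) c < S (exr c) (c-1)" using leftc[of c] c e0 by auto
      have "S (exr c) (c-1) \<le> S (exr c - 1) (c - 1 + 1)"
        using band[rule_format, of "c-1" "exr c"] c e e0 ih exr_le[of c] td by auto
      then show False using lt c by simp
    qed
    then show ?case using inr_step[OF c(1,2)] c by simp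
  qed
  have it: "inr t \<le> h (t - 1)" using bnd[of j0] by simp
  show ?thesis
  proof (rule ccontr)
    assume "exr t \<noteq> 0"
    then have e0: "0 < exr t" by simp
    have lt: "S (exr t - 1) t < S (exr t) (t-1)" using leftc[of t] False e0 by auto
    have "S (exr t) (t-1) \<le> S (exr t - 1) (t - 1 + 1)"
      using band[rule_format, of "t-1" "exr t"] e0 it exr_le[of t] td False by auto
    then show False using lt False by simp
  qed
qed


lemma S'_out: "j < t \<or> j0 + t < j \<Longrightarrow> S' i j = S i j" by (auto simp: S'_def)
lemma S'_a: "t \<le> j \<Longrightarrow> j \<le> j0+t \<Longrightarrow> i < exr j \<Longrightarrow> S' i j = S i j" by (simp add: S'_def)
lemma S'_e: "t \<le> j \<Longrightarrow> j \<le> j0+t \<Longrightarrow> S' (exr j) j = (if j = t then 0 else S (exr j) (j-1))"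
  by (simp add: S'_def)
lemma S'_m: "t \<le> j \<Longrightarrow> j \<le> j0+t \<Longrightarrow> exr j < i \<Longrightarrow> i \<le> inr j \<Longrightarrow> S' i j = S (i-1) j"
  by (simp add: S'_def)
lemma S'_b: "t \<le> j \<Longrightarrow> j \<le> j0+t \<Longrightarrow> inr j < i \<Longrightarrow> S' i j = S i j"
  using exr_le[of j] by (simp add: S'_def)

lemma X_c0: "X (j0+t) = S"
proof (intro ext)
  fix i j
  show "X (j0+t) i j = S i j"
  proof (cases "j0 + t < j")
    case True then show ?thesis by (simp add: X_def S'_out)
  next
    case False
    then show ?thesis using Z[of "p-1" "j0+t"] pp td by (auto simp: X_def inr_c0)
  qed
qed

lemma slide_X: "k \<le> j0 \<Longrightarrow> slide (X (t+k)) (inr (t+k)) (t+k) = S'"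
proof (induction k)
  case 0
  let ?Y = "shiftcol (X t) t (exr t) (inr t)"
  have cl: "slide (X t) (inr t) t = slide ?Y (exr t) t"
  proof (rule climb)
    show "exr t \<le> inr t" by (rule exr_le)
    show "X t (inr t) t = 0" by (simp add: X_def)
    show "\<forall>i'. exr t < i' \<longrightarrow> i' \<le> inr t \<longrightarrow> 0 < X t (i'-1) t \<and> (t = 0 \<or> X t i' (t-1) \<le> X t (i'-1) t)"
    proof (intro allI impI)
      fix i' assume a: "exr t < i'" "i' \<le> inr t"
      have x1: "X t (i'-1) t = S (i'-1) t" using a by (auto simp: X_def)
      have "i' - 1 < p - 1" using a inr_le[of t] by simp
      then have "S (i'-1) t \<noteq> 0" using nz[of "i'-1" t] pp td by simp
      moreover have "t \<noteq> 0 \<Longrightarrow> X t i' (t-1) = S i' (t-1)" by (auto simp: X_def)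
      moreover have "t \<noteq> 0 \<Longrightarrow> S i' (t-1) \<le> S (i'-1) t" using climbc[of t i'] a by simp
      ultimately show "0 < X t (i'-1) t \<and> (t = 0 \<or> X t i' (t-1) \<le> X t (i'-1) t)" using x1 by (cases "t = 0") auto
    qed
  qed
  have nu: "\<not> up_move ?Y 0 t" by (simp add: up_move_def)
  have nl: "\<not> left_move ?Y 0 t"
  proof
    assume "left_move ?Y 0 t"
    then have t0: "0 < t" and "0 < ?Y 0 (t-1)" by (auto simp: left_move_def)
    moreover have "?Y 0 (t-1) = S 0 (t-1)" using t0 by (auto simp: shiftcol_def X_def)
    moreover have "S 0 (t-1) = 0" using Z[of 0 "t-1"] pp td t0 by simp
    ultimately show False by simp
  qed
  have "?Y = S'"
  proof (intro ext)
    fix a b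
    show "?Y a b = S' a b"
    proof (cases "b = t")
      case False
      then show ?thesis by (cases "b < t") (auto simp: shiftcol_def X_def S'_out)
    next
      case True
      consider "a = 0" | "0 < a \<and> a \<le> inr t" | "inr t < a" by linarith
      then show ?thesis
      proof cases
        case 1 then show ?thesis using True S'_e[of t] exr_t td by (simp add: shiftcol_def)
      next
        case 2 then show ?thesis using True S'_m[of t a] exr_t td by (auto simp: shiftcol_def X_def)
      next
        case 3 then show ?thesis using True S'_b[of t a] exr_t td by (auto simp: shiftcol_def X_def)
      qed
    qed
  qed
  then show ?case using cl slide_stop[OF nu nl] exr_t by simp
next
  case (Suc k)
  define c where "c = t + Suc k"
  have c: "t < c" "c \<le> j0 + t" "t + k = c - 1" "0 < c" using Suc.prems by (auto simp: c_def)
  let ?e = "exr c"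
  let ?Y = "shiftcol (X c) c ?e (inr c)"
  have cl: "slide (X c) (inr c) c = slide ?Y ?e c"
  proof (rule climb)
    show "exr c \<le> inr c" by (rule exr_le)
    show "X c (inr c) c = 0" by (simp add: X_def)
    show "\<forall>i'. exr c < i' \<longrightarrow> i' \<le> inr c \<longrightarrow> 0 < X c (i'-1) c \<and> (c = 0 \<or> X c i' (c-1) \<le> X c (i'-1) c)"
    proof (intro allI impI)
      fix i' assume a: "exr c < i'" "i' \<le> inr c"
      have x1: "X c (i'-1) c = S (i'-1) c" using a by (auto simp: X_def)
      have "i' - 1 < p - 1" using a inr_le[of c] by simp
      then have "S (i'-1) c \<noteq> 0" using nz[of "i'-1" c] pp td c by simp
      moreover have "X c i' (c-1) = S i' (c-1)" using c by (auto simp: X_def)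
      moreover have "S i' (c-1) \<le> S (i'-1) c" using climbc[of c i'] a c by simp
      ultimately show "0 < X c (i'-1) c \<and> (c = 0 \<or> X c i' (c-1) \<le> X c (i'-1) c)" using x1 by auto
    qed
  qed
  have y1: "?Y (?e - 1) c = S (?e - 1) c" if "0 < ?e" using that exr_le[of c] by (auto simp: shiftcol_def X_def)
  have y2: "?Y ?e (c-1) = S ?e (c-1)" using c by (auto simp: shiftcol_def X_def)
  have ep: "?e < p" using exr_le[of c] inr_le[of c] pp by simp
  have c1: "c - 1 < j0 + t" "c - 1 < d" "t \<le> c - 1" using c td by auto
  have snz: "S ?e (c-1) \<noteq> 0" using nz[of ?e "c-1"] ep c1 by simp
  have lc: "?e = 0 \<or> S (?e - 1) c < S ?e (c-1)" using leftc c by simp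
  have nu: "\<not> up_move ?Y ?e c" using lc y1 y2 c by (auto simp: up_move_def)
  have lm: "left_move ?Y ?e c"
  proof (cases "?e = 0")
    case True then show ?thesis using y2 snz c by (simp add: left_move_def)
  next
    case False then show ?thesis using lc y1 y2 snz c by (simp add: left_move_def)
  qed
  have sw: "swap_cells ?Y ?e c ?e (c-1) = X (c-1)"
  proof (intro ext)
    fix a b
    have ir: "inr (c-1) = ?e" using inr_step c by simp
    show "swap_cells ?Y ?e c ?e (c-1) a b = X (c-1) a b"
    proof (cases "b = c")
      case True
      consider "a < ?e" | "a = ?e" | "?e < a \<and> a \<le> inr c" | "inr c < a" by linarith
      then show ?thesis
      proof cases
        case 1 then show ?thesis using True c exr_le[of c] S'_a[of c a] by (auto simp: swap_cells_def shiftcol_def X_def)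
      next
        case 2 then show ?thesis using True c S'_e[of c] exr_le[of c] by (auto simp: swap_cells_def shiftcol_def X_def)
      next
        case 3 then show ?thesis using True c S'_m[of c a] exr_le[of c] by (auto simp: swap_cells_def shiftcol_def X_def)
      next
        case 4 then show ?thesis using True c S'_b[of c a] exr_le[of c] by (auto simp: swap_cells_def shiftcol_def X_def)
      qed
    next
      case F: False
      show ?thesis
      proof (cases "b = c - 1")
        case True
        then show ?thesis using F c ir exr_le[of c] by (auto simp: swap_cells_def shiftcol_def X_def)
      next
        case False
        then show ?thesis using F c by (auto simp: swap_cells_def shiftcol_def X_def)
      qed
    qed
  qed
  have ir: "inr (c-1) = ?e" using inr_step c by simp
  have "slide (X c) (inr c) c = slide ?Y ?e c" by (rule cl)
  also have "\<dots> = slide (swap_cells ?Y ?e c ?e (c-1)) ?e (c-1)" by (rule slide_left[OF nu lm])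
  also have "\<dots> = slide (X (c-1)) (inr (c-1)) (c-1)" unfolding sw ir ..
  also have "\<dots> = S'" using Suc.IH Suc.prems c(3) by simp
  finally show ?case unfolding c_def .
qed

lemma slide_S: "slide S (p-1) (j0+t) = S'"
proof -
  have "slide (X (t+j0)) (inr (t+j0)) (t+j0) = S'" by (rule slide_X) simp
  then show ?thesis using X_c0 inr_c0 by (simp add: add.commute)
qed


lemma colS'_col:
  assumes "t \<le> c" "c \<le> j0 + t"
  shows "col_set p S' c = insert (if c = t then 0 else S (exr c) (c-1)) ((\<lambda>i. S i c) ` ({..<p} - {inr c}))"
proof -
  have "(\<lambda>i. S' i c) = (\<lambda>i. if i < exr c then S i c else if i = exr c then (if c = t then 0 else S (exr c) (c-1))
          else if i \<le> inr c then S (i-1) c else S i c)"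
    using assms by (intro ext) (simp add: S'_def)
  moreover have qp: "inr c < p" using inr_le[of c] pp by simp
  ultimately show ?thesis unfolding col_set_img by (simp only:) (rule shift_img[OF exr_le qp])
qed

lemma colX_c:
  shows "col_set p (X c) c = insert 0 ((\<lambda>i. S i c) ` ({..<p} - {inr c}))"
proof -
  have "(\<lambda>i. X c i c) = (\<lambda>i. if i < inr c then S i c else if i = inr c then 0
          else if i \<le> inr c then S (i-1) c else S i c)"
    by (intro ext) (auto simp: X_def)
  moreover have qp: "inr c < p" using inr_le[of c] pp by simp
  ultimately show ?thesis unfolding col_set_img by (simp only:) (rule shift_img[OF order_refl qp])
qed

lemma colX_gt: "c < j \<Longrightarrow> col_set p (X c) j = col_set p S' j"
  by (simp add: col_set_img X_def)
lemma colX_lt: "j < c \<Longrightarrow> col_set p (X c) j = col_set p S j"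
  by (simp add: col_set_img X_def)

lemma colX_step:
  assumes c: "t < c" "c \<le> j0 + t"
  shows "col_set p (X (c-1)) = Sop c (col_set p (X c))"
proof -
  let ?e = "exr c" and ?q = "inr c"
  let ?l = "\<lambda>i. S i (c-1)" and ?u = "\<lambda>i. S i c"
  let ?L = "?l ` {..<p}" and ?U = "?u ` ({..<p} - {?q})"
  let ?A = "col_set p (X c)"
  have c1: "c - 1 < j0 + t" "c - 1 < d" "t \<le> c - 1" "c < d" "c - 1 + 1 = c" using c td by auto
  have qp: "?q < p" using inr_le[of c] pp by simp
  have lnz: "i < p \<Longrightarrow> S i (c-1) \<noteq> 0" for i using nz[of i "c-1"] c1 by simp
  have unz: "i < p \<Longrightarrow> i \<noteq> ?q \<Longrightarrow> S i c \<noteq> 0" for i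
  proof -
    assume i: "i < p" "i \<noteq> ?q"
    show "S i c \<noteq> 0"
    proof (cases "c = j0 + t")
      case True
      then have "i < p - 1" using i inr_c0 by simp
      then show ?thesis using nz[of i c] i c c1 by simp
    next
      case False
      then show ?thesis using nz[of i c] i c c1 by simp
    qed
  qed
  have A1: "?A (c-1) = ?L" using colX_lt[of "c-1" c] c by (simp add: col_set_img)
  have A2: "?A c = insert 0 ?U" by (rule colX_c)
  have L0: "0 \<notin> ?L"
  proof
    assume "0 \<in> ?L"
    then obtain i where "i < p" "S i (c-1) = 0" by (metis (no_types, lifting) imageE lessThan_iff)
    then show False using lnz by blast
  qed
  have U0: "0 \<notin> ?U"
  proof
    assume "0 \<in> ?U"
    then obtain i where "i \<in> {..<p} - {?q}" "0 = S i c" by (rule imageE)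
    then show False using unz by auto
  qed
  have sl: "\<forall>i j. i < j \<longrightarrow> j < p \<longrightarrow> ?l i < ?l j"
  proof (intro allI impI)
    fix i j assume "i < j" "j < p"
    moreover have "\<forall>i. i + 1 < p \<longrightarrow> ?l i < ?l (i+1)" using CS lnz c1 by simp
    ultimately show "?l i < ?l j" by (intro col_strict_mono[of p ?l])
  qed
  have su: "\<forall>i j. i < j \<longrightarrow> j < p \<longrightarrow> i \<noteq> ?q \<longrightarrow> j \<noteq> ?q \<longrightarrow> ?u i < ?u j"
  proof (intro allI impI)
    fix i j assume ij: "i < j" "j < p" "i \<noteq> ?q" "j \<noteq> ?q"
    show "?u i < ?u j"
    proof (cases "c = j0 + t")
      case True
      then have q: "?q = p - 1" using inr_c0 by simp
      have "\<forall>i. i + 1 < p - 1 \<longrightarrow> ?u i < ?u (i+1)"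
        using CS nz True c1 by auto
      moreover have "j < p - 1" using ij q by simp
      ultimately show ?thesis using ij by (intro col_strict_mono[of "p-1" ?u])
    next
      case False
      have "\<forall>i. i + 1 < p \<longrightarrow> ?u i < ?u (i+1)"
        using CS nz False c c1 by auto
      then show ?thesis using ij by (intro col_strict_mono[of p ?u])
    qed
  qed
  have cl: "\<forall>i. ?e < i \<longrightarrow> i \<le> ?q \<longrightarrow> ?l i \<le> ?u (i-1)" using climbc c by auto
  have rw: "\<forall>i. ?q < i \<longrightarrow> i < p \<longrightarrow> ?l i \<le> ?u i"
  proof (intro allI impI)
    fix i assume i: "?q < i" "i < p"
    then have "S i c \<noteq> 0" using unz by simp
    then show "?l i \<le> ?u i" using RW[of i "c-1"] i c1 by simp
  qed
  have lf: "?e = 0 \<or> ?u (?e - 1) < ?l ?e" using leftc c by simp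
  note br = bracket[OF exr_le qp sl su cl rw lf]
  have LL: "?A (c-1) - {0} = ?L" using A1 L0 by simp
  have UU: "?A c - {0} = ?U" using A2 U0 by simp
  have cond: "Sop_cond (?A (c-1)) (?A c)"
    unfolding Sop_cond_def LL UU using A1 A2 L0 br(1) by blast
  have bb: "Sop_b (?A (c-1)) (?A c) = S ?e (c-1)"
    unfolding Sop_b_def LL UU
  proof (rule Greatest_equality)
    show "0 < brf ?L ?U (S ?e (c-1))" by (rule br(1))
    fix y assume "0 < brf ?L ?U y"
    then show "y \<le> S ?e (c-1)" using br(2)[of y] by (meson leI not_less)
  qed
  have ep: "?e < p" using exr_le[of c] qp by simp
  have il: "inj_on ?l {..<p}" by (rule strict_inj_on) (use sl in auto)
  have Ldiff: "?L - {S ?e (c-1)} = ?l ` ({..<p} - {?e})"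
  proof -
    have "?l ` ({..<p} - {?e}) = ?l ` {..<p} - ?l ` {?e}"
      by (rule inj_on_image_set_diff[OF il]) (use ep in auto)
    then show ?thesis by simp
  qed
  have ir: "inr (c-1) = ?e" using inr_step c by simp
  show ?thesis
  proof (intro ext)
    fix j
    have S1: "Sop c ?A = ?A(c-1 := insert 0 (?A (c-1) - {S ?e (c-1)}), c := insert (S ?e (c-1)) (?A c - {0}))"
      using cond bb by (simp add: Sop_def)
    show "col_set p (X (c-1)) j = Sop c ?A j"
    proof (cases "j = c - 1")
      case True
      have "col_set p (X (c-1)) (c-1) = insert 0 ((\<lambda>i. S i (c-1)) ` ({..<p} - {?e}))"
        using colX_c[of "c-1"] ir by simp
      moreover have "Sop c ?A (c-1) = insert 0 (?L - {S ?e (c-1)})"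
        unfolding S1 using c1 A1 by simp
      ultimately show ?thesis using True Ldiff by simp
    next
      case F: False
      show ?thesis
      proof (cases "j = c")
        case True
        have "col_set p (X (c-1)) c = col_set p S' c" using colX_gt[of "c-1" c] c by simp
        also have "\<dots> = insert (S ?e (c-1)) ?U" using colS'_col[of c] c by simp
        finally show ?thesis unfolding S1 using True UU by simp
      next
        case False
        then have "Sop c ?A j = ?A j" unfolding S1 using F by simp
        moreover have "col_set p (X (c-1)) j = ?A j"
        proof (cases "j < c - 1")
          case True
          then show ?thesis using colX_lt[of j "c-1"] colX_lt[of j c] c by simp
        next
          case False
          then have "c < j" using F \<open>j \<noteq> c\<close> by simp
          then show ?thesis using colX_gt[of "c-1" j] colX_gt[of c j] by simp
        qed
        ultimately show ?thesis by simp
      qed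
    qed
  qed
qed

lemma colX_run: "k \<le> j0 \<Longrightarrow> col_set p (X (j0+t-k)) = run (map (\<lambda>u. j0+t-u) [0..<k]) (col_set p S)"
proof (induction k)
  case 0 then show ?case using X_c0 by simp
next
  case (Suc k)
  define c where "c = j0 + t - k"
  have c: "t < c" "c \<le> j0 + t" "j0 + t - Suc k = c - 1" using Suc.prems by (auto simp: c_def)
  have "col_set p (X (j0+t-Suc k)) = Sop c (col_set p (X c))" using colX_step[OF c(1,2)] c(3) by simp
  also have "\<dots> = Sop c (run (map (\<lambda>u. j0+t-u) [0..<k]) (col_set p S))" using Suc by (simp add: c_def)
  also have "\<dots> = run (map (\<lambda>u. j0+t-u) [0..<Suc k]) (col_set p S)" by (simp add: c_def)
  finally show ?case .
qed

lemma colS': "col_set p S' = run (map (\<lambda>u. j0+t-u) [0..<j0]) (col_set p S)"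
proof -
  have "col_set p S' = col_set p (X t)"
  proof (intro ext)
    fix j
    show "col_set p S' j = col_set p (X t) j"
    proof (cases "t < j")
      case True then show ?thesis using colX_gt by simp
    next
      case False
      show ?thesis
      proof (cases "j = t")
        case True then show ?thesis using colS'_col[of t] colX_c[of t] by simp
      next
        case F2: False
        then have "j < t" using False by simp
        then show ?thesis using colX_lt[of j t] by (simp add: col_set_img S'_out)
      qed
    qed
  qed
  then show ?thesis using colX_run[of j0] by simp
qed


lemma exr_lt_p: "exr c \<le> p - 1" using exr_le[of c] inr_le[of c] by simp

lemma Sp_zero:
  assumes i: "i < p" and j: "j < d"
  shows "S' i j = 0 \<longleftrightarrow> (i = 0 \<and> j < t + 1) \<or> (i = p - 1 \<and> j0 + (t + 1) \<le> j)"
proof (cases "j < t")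
  case True then show ?thesis using Z[OF i j] S'_out[of j i] by auto
next
  case F1: False
  show ?thesis
  proof (cases "j0 + t < j")
    case True then show ?thesis using Z[OF i j] S'_out[of j i] by auto
  next
    case False
    then have jr: "t \<le> j" "j \<le> j0 + t" using F1 by auto
    have ir: "inr j \<le> p - 1" by (rule inr_le)
    have er: "exr j \<le> inr j" by (rule exr_le)
    consider "i < exr j" | "i = exr j" | "exr j < i \<and> i \<le> inr j" | "inr j < i" by linarith
    then show ?thesis
    proof cases
      case 1
      then have "S i j \<noteq> 0" using nz[of i j] i j jr ir er by simp
      moreover have "\<not> (i = 0 \<and> j = t)" using 1 exr_t by auto
      ultimately show ?thesis using S'_a[OF jr 1] jr by auto
    next
      case 2
      show ?thesis
      proof (cases "j = t")
        case True then show ?thesis using S'_e[OF jr] 2 exr_t by simp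
      next
        case False
        then have "t \<le> j - 1" "j - 1 < d" "j - 1 < j0 + t" using jr j by auto
        then have "S i (j-1) \<noteq> 0" using nz[of i "j-1"] i by simp
        then show ?thesis using S'_e[OF jr] 2 False jr by auto
      qed
    next
      case 3
      then have "i - 1 < p - 1" using ir by linarith
      then have "S (i-1) j \<noteq> 0" using nz[of "i-1" j] i j jr by simp
      then show ?thesis using S'_m[OF jr] 3 jr by auto
    next
      case 4
      have "j < j0 + t"
      proof (rule ccontr)
        assume "\<not> j < j0 + t"
        then have "j = j0 + t" using jr by simp
        then show False using 4 inr_c0 i by simp
      qed
      then have "S i j \<noteq> 0" using nz[of i j] i j jr by simp
      then show ?thesis using S'_b[OF jr 4] 4 jr by auto
    qed
  qed
qed

lemma Sp_vals: "i < p \<Longrightarrow> j < d \<Longrightarrow> S' i j < n"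
proof -
  assume i: "i < p" and j: "j < d"
  have n0: "0 < n" using V[of 0 0] pp td by simp
  show ?thesis
  proof (cases "t \<le> j \<and> j \<le> j0 + t")
    case False then show ?thesis using S'_out[of j i] V[OF i j] by auto
  next
    case True
    then have jr: "t \<le> j" "j \<le> j0 + t" by auto
    consider "i < exr j" | "i = exr j" | "exr j < i \<and> i \<le> inr j" | "inr j < i" by linarith
    then show ?thesis
    proof cases
      case 1 then show ?thesis using S'_a[OF jr 1] V[OF i j] by simp
    next
      case 2 then show ?thesis using S'_e[OF jr] V[of i "j-1"] i j n0 by auto
    next
      case 3 then show ?thesis using S'_m[OF jr] V[of "i-1" j] i j by auto
    next
      case 4 then show ?thesis using S'_b[OF jr 4] V[OF i j] by simp
    qed
  qed
qed

lemma Sp_le_S: "i < p - 1 \<Longrightarrow> t \<le> j \<Longrightarrow> j \<le> j0 + t \<Longrightarrow> S' i j \<le> S i j"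
proof -
  assume i: "i < p - 1" and jr: "t \<le> j" "j \<le> j0 + t"
  have j: "j < d" using jr td by simp
  consider "i < exr j" | "i = exr j" | "exr j < i \<and> i \<le> inr j" | "inr j < i" by linarith
  then show ?thesis
  proof cases
    case 1 then show ?thesis using S'_a[OF jr 1] by simp
  next
    case 2
    show ?thesis
    proof (cases "j = t")
      case True then show ?thesis using S'_e[OF jr] 2 by simp
    next
      case False
      then have "S i j \<noteq> 0" using nz[of i j] i j jr by simp
      then have "S i (j-1) \<le> S i j" using RW[of i "j-1"] i j jr False by simp
      then show ?thesis using S'_e[OF jr] 2 False by simp
    qed
  next
    case 3
    then have "S i j \<noteq> 0" using nz[of i j] i j jr by simp
    then have "S (i-1) j < S i j" using CS[of "i-1" j] i j 3 by simp
    then show ?thesis using S'_m[OF jr] 3 by simp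
  next
    case 4 then show ?thesis using S'_b[OF jr 4] by simp
  qed
qed


lemma Sp_CS:
  assumes i: "i + 1 < p" and j: "j < d" and nz1: "S' (i+1) j \<noteq> 0"
  shows "S' i j < S' (i+1) j"
proof (cases "t \<le> j \<and> j \<le> j0 + t")
  case False then show ?thesis using S'_out[of j] CS[OF i j] nz1 by auto
next
  case True
  then have jr: "t \<le> j" "j \<le> j0 + t" by auto
  let ?e = "exr j" and ?q = "inr j"
  have ir: "?q \<le> p - 1" by (rule inr_le)
  have er: "?e \<le> ?q" by (rule exr_le)
  have qc0: "?q = p - 1" if "j = j0 + t" using that inr_c0 by simp
  consider "i + 1 < ?e" | "i + 1 = ?e" | "i = ?e \<and> i + 1 \<le> ?q" | "i = ?e \<and> ?q < i + 1"
    | "?e < i \<and> i + 1 \<le> ?q" | "?e < i \<and> i = ?q" | "?q < i" by linarith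
  then show ?thesis
  proof cases
    case 1
    then show ?thesis using S'_a[OF jr, of i] S'_a[OF jr, of "i+1"] CS[OF i j] nz1 by simp
  next
    case 2
    then have jt: "j \<noteq> t" using exr_t by auto
    then have "0 < j" using jr by simp
    then have "S (?e - 1) j < S ?e (j-1)" using leftc[of j] 2 by simp
    moreover have "?e - 1 = i" using 2 by simp
    ultimately show ?thesis using S'_a[OF jr, of i] S'_e[OF jr] 2 jt by simp
  next
    case 3
    have m: "S' (i+1) j = S i j" using S'_m[OF jr, of "i+1"] 3 by simp
    show ?thesis
    proof (cases "j = t")
      case True then show ?thesis using S'_e[OF jr] 3 m nz1 by simp
    next
      case False
      then have j1: "t \<le> j - 1" "j - 1 < d" "j - 1 < j0 + t" "0 < j" using jr j by auto
      have a1: "S ?e (j-1) < S (?e+1) (j-1)" using CS[of ?e "j-1"] nz[of "?e+1" "j-1"] j1 i 3 by simp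
      have a2: "S (?e+1) (j-1) \<le> S ?e j" using climbc[of j "?e+1"] 3 j1 by simp
      show ?thesis using S'_e[OF jr] 3 m False a1 a2 by simp
    qed
  next
    case 4
    then have eq: "?e = ?q" using er by simp
    have b: "S' (i+1) j = S (i+1) j" using S'_b[OF jr, of "i+1"] 4 by simp
    show ?thesis
    proof (cases "j = t")
      case True then show ?thesis using S'_e[OF jr] 4 b nz1 by simp
    next
      case False
      then have j1: "t \<le> j - 1" "j - 1 < d" "0 < j" using jr j by auto
      have jc: "j < j0 + t"
      proof (rule ccontr)
        assume "\<not> j < j0 + t"
        then have "?q = p - 1" using qc0 jr by simp
        then show False using 4 i by linarith
      qed
      have z: "S i j \<noteq> 0" using nz[of i j] i j jr jc by simp
      have a1: "S i (j-1) \<le> S i j" using RW[of i "j-1"] z i j1 j by simp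
      have a2: "S i j < S (i+1) j" using CS[OF i j] nz1 b by simp
      show ?thesis using S'_e[OF jr] 4 b False a1 a2 by simp
    qed
  next
    case 5
    have "S i j \<noteq> 0" using nz[of i j] i j jr 5 ir by simp
    then show ?thesis using S'_m[OF jr, of i] S'_m[OF jr, of "i+1"] 5 CS[of "i-1" j] i j by simp
  next
    case 6
    have jc: "j < j0 + t"
    proof (rule ccontr)
      assume "\<not> j < j0 + t"
      then have "?q = p - 1" using qc0 jr by simp
      then show False using 6 i by linarith
    qed
    have z: "S i j \<noteq> 0" using nz[of i j] i j jr jc by simp
    have b: "S' (i+1) j = S (i+1) j" using S'_b[OF jr, of "i+1"] 6 by simp
    have a1: "S (i-1) j < S i j" using CS[of "i-1" j] z i j 6 by simp
    have a2: "S i j < S (i+1) j" using CS[OF i j] nz1 b by simp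
    show ?thesis using S'_m[OF jr, of i] 6 b a1 a2 by simp
  next
    case 7
    then show ?thesis using S'_b[OF jr, of i] S'_b[OF jr, of "i+1"] CS[OF i j] nz1 by simp
  qed
qed


lemma Sp_RW:
  assumes i: "i < p" and j: "j + 1 < d" and nz1: "S' i (j+1) \<noteq> 0"
  shows "S' i j \<le> S' i (j+1)"
proof -
  consider "j + 1 < t" | "j + 1 = t" | "t \<le> j \<and> j + 1 \<le> j0 + t" | "j = j0 + t" | "j0 + t < j" by linarith
  then show ?thesis
  proof cases
    case 1 then show ?thesis using S'_out[of j i] S'_out[of "j+1" i] RW[OF i j] nz1 by simp
  next
    case 2
    then have jr: "t \<le> j + 1" "j + 1 \<le> j0 + t" "0 < t" "j = t - 1" by auto
    have l: "S' i j = S i j" using S'_out[of j i] 2 by simp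
    consider "i = 0" | "0 < i \<and> i \<le> inr t" | "inr t < i" by linarith
    then show ?thesis
    proof cases
      case 1 then show ?thesis using S'_e[OF jr(1,2)] exr_t 2 nz1 by simp
    next
      case 3 then show ?thesis using S'_b[OF jr(1,2), of i] 2 l RW[OF i j] nz1 by simp
    next
      case c2: 2
      have "S i (t-1) \<le> S (i-1) t" using climbc[of t i] c2 exr_t jr by simp
      moreover have "t - 1 = j" using 2 by simp
      ultimately show ?thesis using S'_m[OF jr(1,2), of i] c2 exr_t 2 l by simp
    qed
  next
    case 3
    then have jr: "t \<le> j" "j \<le> j0 + t" and jr1: "t \<le> j + 1" "j + 1 \<le> j0 + t" "j < j0 + t" by auto
    have jd: "j < d" using j by simp
    let ?e = "exr j" and ?q = "inr j" and ?q2 = "inr (j+1)"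
    have qe: "?q = exr (j+1)" using inr_step[of "j+1"] jr1 3 by simp
    have er: "?e \<le> ?q" by (rule exr_le)
    have er2: "?q \<le> ?q2" using exr_le[of "j+1"] qe by simp
    have ir: "?q \<le> p - 1" by (rule inr_le)
    consider "i < ?e" | "i = ?e" | "?e < i \<and> i < ?q" | "?e < i \<and> i = ?q" | "?q < i \<and> i \<le> ?q2" | "?q2 < i"
      by linarith
    then show ?thesis
    proof cases
      case 1
      then have "i < exr (j+1)" using er qe by simp
      then show ?thesis using S'_a[OF jr, of i] S'_a[OF jr1(1,2), of i] 1 RW[OF i j] nz1 by simp
    next
      case 2
      have zj: "S i j \<noteq> 0" using nz[of i j] i jd jr jr1 by simp
      have le1: "S' i j \<le> S i j"
      proof (cases "j = t")
        case True then show ?thesis using S'_e[OF jr] 2 by simp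
      next
        case False
        then have "S i (j-1) \<le> S i j" using RW[of i "j-1"] zj i jr jd by simp
        then show ?thesis using S'_e[OF jr] 2 False by simp
      qed
      show ?thesis
      proof (cases "?e < ?q")
        case True
        then have "S' i (j+1) = S i (j+1)" using S'_a[OF jr1(1,2), of i] 2 qe by simp
        then show ?thesis using le1 RW[OF i j] nz1 by simp
      next
        case False
        then have "i = exr (j+1)" using 2 er qe by simp
        then have "S' i (j+1) = S i j" using S'_e[OF jr1(1,2)] jr by simp
        then show ?thesis using le1 by simp
      qed
    next
      case c3: 3
      have zj: "S i j \<noteq> 0" using nz[of i j] i jd jr jr1 by simp
      have "S (i-1) j < S i j" using CS[of "i-1" j] zj i jd c3 by simp
      moreover have "S' i (j+1) = S i (j+1)" using S'_a[OF jr1(1,2), of i] c3 qe by simp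
      ultimately show ?thesis using S'_m[OF jr, of i] c3 er RW[OF i j] nz1 by simp
    next
      case 4
      have zj: "S i j \<noteq> 0" using nz[of i j] i jd jr jr1 by simp
      have "S (i-1) j < S i j" using CS[of "i-1" j] zj i jd 4 by simp
      moreover have "S' i (j+1) = S i j" using S'_e[OF jr1(1,2)] 4 qe jr by simp
      ultimately show ?thesis using S'_m[OF jr, of i] 4 by simp
    next
      case 5
      have "S i j \<le> S (i-1) (j+1)" using climbc[of "j+1" i] 5 qe by simp
      then show ?thesis using S'_b[OF jr, of i] S'_m[OF jr1(1,2), of i] 5 qe by simp
    next
      case 6
      then show ?thesis using S'_b[OF jr, of i] S'_b[OF jr1(1,2), of i] 6 er2 RW[OF i j] nz1 by simp
    qed
  next
    case 4
    have r: "S' i (j+1) = S i (j+1)" using S'_out[of "j+1" i] 4 by simp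
    have "i \<noteq> p - 1" using Z[of i "j+1"] i j 4 nz1 r by auto
    then have ip: "i < p - 1" using i by simp
    have "S' i j \<le> S i j" using Sp_le_S[OF ip] 4 by simp
    then show ?thesis using r RW[OF i j] nz1 by simp
  next
    case 5 then show ?thesis using S'_out[of j i] S'_out[of "j+1" i] RW[OF i j] nz1 by simp
  qed
qed

lemma Sp_band:
  assumes c: "t \<le> c" "c \<le> j0 + t" "c + 1 < d" and i: "0 < i" "i \<le> inr c"
    and lo: "c = t \<or> inr (c-1) < i"
  shows "S' i c \<le> S' (i-1) (c+1)"
proof -
  have ei: "exr c < i"
  proof (cases "c = t")
    case True then show ?thesis using exr_t i by simp
  next
    case False then show ?thesis using lo inr_step[of c] c by simp
  qed
  have l: "S' i c = S (i-1) c" using S'_m[OF c(1,2)] ei i by simp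
  have r: "S' (i-1) (c+1) = S (i-1) (c+1)"
  proof (cases "c + 1 \<le> j0 + t")
    case True
    have "inr c = exr (c+1)" using inr_step[of "c+1"] True c by simp
    then have "i - 1 < exr (c+1)" using i by simp
    then show ?thesis using S'_a[of "c+1" "i-1"] True c by simp
  next
    case False then show ?thesis using S'_out by simp
  qed
  have ip: "i - 1 < p - 1" using i inr_le[of c] by linarith
  then have "S (i-1) (c+1) \<noteq> 0" using nz[of "i-1" "c+1"] c by simp
  moreover have "i - 1 < p" using ip by simp
  ultimately have "S (i-1) c \<le> S (i-1) (c+1)" using RW[of "i-1" c] c by simp
  then show ?thesis using l r by simp
qed

lemma INV': "INV p n d j0 (t+1) S'"
  unfolding INV_def
proof (intro conjI)
  show "\<forall>i<p. \<forall>j<d. (S' i j = 0) = (i = 0 \<and> j < t + 1 \<or> i = p - 1 \<and> j0 + (t + 1) \<le> j)"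
    by (intro allI impI) (rule Sp_zero)
  show "\<forall>i<p. \<forall>j<d. S' i j < n" by (intro allI impI) (rule Sp_vals)
  show "\<forall>i j. i + 1 < p \<longrightarrow> j < d \<longrightarrow> S' (i + 1) j \<noteq> 0 \<longrightarrow> S' i j < S' (i + 1) j"
    by (intro allI impI) (rule Sp_CS)
  show "\<forall>i j. i < p \<longrightarrow> j + 1 < d \<longrightarrow> S' i (j + 1) \<noteq> 0 \<longrightarrow> S' i j \<le> S' i (j + 1)"
    by (intro allI impI) (rule Sp_RW)
  have B: "\<forall>c i. t + 1 - 1 \<le> c \<longrightarrow> c \<le> j0 + (t + 1) - 1 \<longrightarrow> c + 1 < d \<longrightarrow> 0 < i \<longrightarrow> i \<le> inr c \<longrightarrow>
          (c = t + 1 - 1 \<or> inr (c - 1) < i) \<longrightarrow> S' i c \<le> S' (i - 1) (c + 1)"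
    by (intro allI impI, rule Sp_band) auto
  have h0: "inr (j0 + (t + 1) - 1) = p - 1" using inr_c0 by simp
  show "0 < t + 1 \<longrightarrow> (\<exists>h. h (j0 + (t + 1) - 1) = p - 1 \<and>
       (\<forall>c i. t + 1 - 1 \<le> c \<longrightarrow> c \<le> j0 + (t + 1) - 1 \<longrightarrow> c + 1 < d \<longrightarrow> 0 < i \<longrightarrow> i \<le> h c \<longrightarrow>
          (c = t + 1 - 1 \<or> h (c - 1) < i) \<longrightarrow> S' i c \<le> S' (i - 1) (c + 1)))"
    using B h0 by blast
qed

end

lemma hole_step:
  assumes "INV p n d j0 t S" "0 < p" "j0 + t < d"
  shows "INV p n d j0 (t+1) (slide S (p-1) (j0+t))"
    and "col_set p (slide S (p-1) (j0+t)) = run (map (\<lambda>u. j0+t-u) [0..<j0]) (col_set p S)"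
proof -
  interpret hole p n d j0 t S using assms by unfold_locales
  show "INV p n d j0 (t+1) (slide S (p-1) (j0+t))" using INV' slide_S by simp
  show "col_set p (slide S (p-1) (j0+t)) = run (map (\<lambda>u. j0+t-u) [0..<j0]) (col_set p S)"
    using colS' slide_S by simp
qed




fun Sseq :: "nat \<Rightarrow> nat \<Rightarrow> (nat \<Rightarrow> nat \<Rightarrow> nat) \<Rightarrow> nat \<Rightarrow> (nat \<Rightarrow> nat \<Rightarrow> nat)" where
  "Sseq p j0 T0 0 = T0"
| "Sseq p j0 T0 (Suc t) = slide (Sseq p j0 T0 t) (p-1) (j0+t)"

definition Tw :: "nat \<Rightarrow> nat \<Rightarrow> nat list" where
  "Tw j0 r = concat (map (\<lambda>t. map (\<lambda>u. j0+t-u) [0..<j0]) [0..<r])"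

lemma Sseq_props:
  assumes "INV p n d j0 0 T0" "0 < p" "j0 + t \<le> d"
  shows "INV p n d j0 t (Sseq p j0 T0 t) \<and> col_set p (Sseq p j0 T0 t) = run (Tw j0 t) (col_set p T0)"
  using assms(3)
proof (induction t)
  case 0 then show ?case using assms(1) by (simp add: Tw_def)
next
  case (Suc t)
  then have IH: "INV p n d j0 t (Sseq p j0 T0 t)" "col_set p (Sseq p j0 T0 t) = run (Tw j0 t) (col_set p T0)"
    by auto
  have td: "j0 + t < d" using Suc.prems by simp
  note hs = hole_step[OF IH(1) assms(2) td]
  have "Tw j0 (Suc t) = Tw j0 t @ map (\<lambda>u. j0+t-u) [0..<j0]" by (simp add: Tw_def)
  then show ?case using hs IH(2) by simp
qed

lemma foldl_id:
  "\<forall>j\<in>set xs. \<not> P j \<Longrightarrow> foldl (\<lambda>S j. if P j then f S j else S) S xs = S"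
  by (induction xs arbitrary: S) auto

lemma foldl_Sseq:
  assumes "\<forall>j<d. (T (p-1) j = n \<longleftrightarrow> j0 \<le> j)" "j0 + t \<le> d"
  shows "foldl (\<lambda>S j. if T (p-1) j = n then slide S (p-1) j else S) T0 [0..<j0+t] = Sseq p j0 T0 t"
  using assms(2)
proof (induction t)
  case 0
  have "\<forall>j\<in>set [0..<j0]. \<not> T (p-1) j = n" using assms(1) 0 by auto
  then show ?case by (simp add: foldl_id)
next
  case (Suc t)
  have "T (p-1) (j0+t) = n" using assms(1) Suc.prems by simp
  then show ?case using Suc by simp
qed

lemma strict_col_sorted:
  fixes g :: "nat \<Rightarrow> nat"
  assumes "\<forall>i. i + 1 < p \<longrightarrow> g i < g (i+1)"
  shows "sorted_list_of_set (g ` {..<p}) = map g [0..<p]"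
proof -
  have sm: "\<forall>i j. i < j \<longrightarrow> j < p \<longrightarrow> g i < g j" using col_strict_mono[OF assms] by blast
  have inj: "inj_on g {..<p}" by (rule strict_inj_on) (use sm in auto)
  have "sorted_wrt (<) (map g [0..<p])"
    unfolding sorted_wrt_iff_nth_less using sm by auto
  moreover have "set (map g [0..<p]) = g ` {..<p}" by auto
  moreover have "length (map g [0..<p]) = card (g ` {..<p})" using card_image[OF inj] by simp
  ultimately show ?thesis by (subst sorted_list_of_set_unique[symmetric]) auto
qed

lemma strict_col_nth:
  fixes g :: "nat \<Rightarrow> nat"
  assumes "\<forall>i. i + 1 < p \<longrightarrow> g i < g (i+1)" "i < p"
  shows "sorted_list_of_set (g ` {..<p}) ! i = g i"
  using strict_col_sorted[OF assms(1)] assms(2) by simp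

lemma strict_col_card:
  fixes g :: "nat \<Rightarrow> nat"
  assumes "\<forall>i. i + 1 < p \<longrightarrow> g i < g (i+1)"
  shows "card (g ` {..<p}) = p"
proof -
  have sm: "\<forall>i j. i < j \<longrightarrow> j < p \<longrightarrow> g i < g j" using col_strict_mono[OF assms] by blast
  have inj: "inj_on g {..<p}" by (rule strict_inj_on) (use sm in auto)
  then show ?thesis by (simp add: card_image)
qed

definition T0of :: "nat \<Rightarrow> nat \<Rightarrow> nat \<Rightarrow> (nat \<Rightarrow> nat \<Rightarrow> nat) \<Rightarrow> (nat \<Rightarrow> nat \<Rightarrow> nat)" where
  "T0of p n d T = (\<lambda>i j. if i < p \<and> j < d \<and> T i j = n then 0 else T i j)"

lemma semi_n_bottom:
  assumes "semistandard p n d T" "i < p" "j < d" "T i j = n"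
  shows "i = p - 1"
proof (rule ccontr)
  assume "i \<noteq> p - 1"
  then have "i + 1 < p" using assms(2) by simp
  then have "T i j < T (i+1) j" "T (i+1) j \<le> n" using assms(1,3) unfolding semistandard_def by auto
  then show False using assms(4) by simp
qed

lemma INV_init:
  assumes ss: "semistandard p n d T" and pp: "0 < p" and j0: "\<forall>j<d. (T (p-1) j = n \<longleftrightarrow> j0 \<le> j)"
  shows "INV p n d j0 0 (T0of p n d T)"
proof -
  have rng: "i < p \<Longrightarrow> j < d \<Longrightarrow> 1 \<le> T i j \<and> T i j \<le> n" for i j using ss unfolding semistandard_def by auto
  have cs: "i + 1 < p \<Longrightarrow> j < d \<Longrightarrow> T i j < T (i+1) j" for i j using ss unfolding semistandard_def by auto
  have rw: "i < p \<Longrightarrow> j + 1 < d \<Longrightarrow> T i j \<le> T i (j+1)" for i j using ss unfolding semistandard_def by auto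
  have nb: "i < p \<Longrightarrow> j < d \<Longrightarrow> T i j = n \<Longrightarrow> i = p - 1" for i j using semi_n_bottom[OF ss] by blast
  show ?thesis unfolding INV_def
  proof (intro conjI allI impI)
    fix i j assume i: "i < p" and j: "j < d"
    show "(T0of p n d T i j = 0) = (i = 0 \<and> j < 0 \<or> i = p - 1 \<and> j0 + 0 \<le> j)"
      using rng[OF i j] nb[OF i j] j0 j i by (auto simp: T0of_def)
    show "T0of p n d T i j < n" using rng[OF i j] i j by (auto simp: T0of_def)
  next
    fix i j assume a: "i + 1 < p" "j < d" "T0of p n d T (i + 1) j \<noteq> 0"
    have "T i j \<noteq> n" using nb[of i j] a by auto
    moreover have "T (i+1) j \<noteq> n" using a by (auto simp: T0of_def)
    ultimately show "T0of p n d T i j < T0of p n d T (i + 1) j" using cs[of i j] a by (simp add: T0of_def)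
  next
    fix i j assume a: "i < p" "j + 1 < d" "T0of p n d T i (j + 1) \<noteq> 0"
    have ne: "T i (j+1) \<noteq> n" using a by (auto simp: T0of_def)
    have "T i j \<le> T i (j+1)" using rw a by simp
    moreover have "T i (j+1) \<le> n" using rng[of i "j+1"] a by simp
    ultimately have "T i j \<noteq> n" using ne by auto
    then show "T0of p n d T i j \<le> T0of p n d T i (j + 1)" using ne \<open>T i j \<le> T i (j+1)\<close> by (simp add: T0of_def)
  qed simp
qed

lemma prom_result:
  assumes ss: "semistandard p n d T" and pp: "0 < p" and j0: "\<forall>j<d. (T (p-1) j = n \<longleftrightarrow> j0 \<le> j)"
    and j0d: "j0 \<le> d"
  shows "\<exists>F. prom p n d T = (\<lambda>i j. if i < p \<and> j < d then F i j + 1 else 0)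
     \<and> (\<forall>i<p. \<forall>j<d. F i j = sorted_list_of_set (col_set p F j) ! i)
     \<and> col_set p F = run (Tw j0 (d - j0)) (col_set p (T0of p n d T))
     \<and> (\<forall>j<d. card (col_set p F j) = p \<and> col_set p F j \<subseteq> {0..<n})"
proof -
  let ?T0 = "T0of p n d T"
  let ?F = "Sseq p j0 ?T0 (d - j0)"
  have I0: "INV p n d j0 0 ?T0" by (rule INV_init[OF ss pp j0])
  have P: "INV p n d j0 (d - j0) ?F \<and> col_set p ?F = run (Tw j0 (d - j0)) (col_set p ?T0)"
    by (rule Sseq_props[OF I0 pp]) (use j0d in simp)
  have fo: "foldl (\<lambda>S j. if T (p-1) j = n then slide S (p-1) j else S) ?T0 [0..<d] = ?F"
    using foldl_Sseq[of d T p n j0 "d - j0" ?T0] j0 j0d by simp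
  have pr: "prom p n d T = (\<lambda>i j. if i < p \<and> j < d then ?F i j + 1 else 0)"
    unfolding prom_def Let_def T0of_def[symmetric] fo ..
  have Z: "\<forall>i<p. \<forall>j<d. (?F i j = 0 \<longleftrightarrow> (i = 0 \<and> j < d - j0) \<or> (i = p - 1 \<and> j0 + (d - j0) \<le> j))"
    using P[THEN conjunct1, unfolded INV_def, THEN conjunct1] .
  have Vn: "\<forall>i<p. \<forall>j<d. ?F i j < n" using P[THEN conjunct1, unfolded INV_def, THEN conjunct2, THEN conjunct1] .
  have CS: "\<forall>i j. i + 1 < p \<longrightarrow> j < d \<longrightarrow> ?F (i+1) j \<noteq> 0 \<longrightarrow> ?F i j < ?F (i+1) j"
    using P[THEN conjunct1, unfolded INV_def, THEN conjunct2, THEN conjunct2, THEN conjunct1] .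
  have col: "\<forall>i. i + 1 < p \<longrightarrow> ?F i j < ?F (i+1) j" if j: "j < d" for j
  proof (intro allI impI)
    fix i assume i: "i + 1 < p"
    have "?F (i+1) j \<noteq> 0" using Z i j j0d by auto
    then show "?F i j < ?F (i+1) j" using CS i j by blast
  qed
  show ?thesis
  proof (intro exI[of _ ?F] conjI allI impI)
    show "prom p n d T = (\<lambda>i j. if i < p \<and> j < d then ?F i j + 1 else 0)" by (rule pr)
    show "col_set p ?F = run (Tw j0 (d - j0)) (col_set p ?T0)" using P[THEN conjunct2] .
  next
    fix i j assume i: "i < p" and j: "j < d"
    show "?F i j = sorted_list_of_set (col_set p ?F j) ! i"
      unfolding col_set_img using strict_col_nth[OF col[OF j] i] by simp
  next
    fix j assume j: "j < d"
    show "card (col_set p ?F j) = p" unfolding col_set_img by (rule strict_col_card[OF col[OF j]])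
    show "col_set p ?F j \<subseteq> {0..<n}" unfolding col_set_img using Vn j by auto
  qed
qed




lemma semi_facts:
  assumes ss: "semistandard p n d T" and j: "j < d"
  shows "col_set p T j \<subseteq> {1..n}" "\<forall>i. i + 1 < p \<longrightarrow> T i j < T (i+1) j" "card (col_set p T j) = p"
proof -
  show "col_set p T j \<subseteq> {1..n}" using ss j unfolding semistandard_def col_set_def by auto
  show cs: "\<forall>i. i + 1 < p \<longrightarrow> T i j < T (i+1) j" using ss j unfolding semistandard_def by auto
  show "card (col_set p T j) = p" unfolding col_set_img by (rule strict_col_card[OF cs])
qed

lemma row_mono:
  assumes ss: "semistandard p n d T" and i: "i < p" and jj: "j \<le> j'" "j' < d"
  shows "T i j \<le> T i j'"
  using jj
proof (induction j')
  case 0 then show ?case by simp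
next
  case (Suc j')
  show ?case
  proof (cases "j = Suc j'")
    case True then show ?thesis by simp
  next
    case False
    then have "T i j \<le> T i j'" using Suc by simp
    moreover have "T i j' \<le> T i (j'+1)" using ss i Suc.prems unfolding semistandard_def by auto
    ultimately show ?thesis by simp
  qed
qed

lemma exists_j0:
  assumes ss: "semistandard p n d T" and pp: "0 < p"
  shows "\<exists>j0 \<le> d. \<forall>j<d. (T (p-1) j = n \<longleftrightarrow> j0 \<le> j)"
proof -
  define P where "P = (\<lambda>j. j = d \<or> (j < d \<and> T (p-1) j = n))"
  define j0 where "j0 = (LEAST j. P j)"
  have Pd: "P d" by (simp add: P_def)
  have j0d: "j0 \<le> d" unfolding j0_def by (rule Least_le[where P=P, OF Pd])
  have Pj0: "P j0" unfolding j0_def by (rule LeastI[where P=P, OF Pd])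
  show ?thesis
  proof (intro exI[of _ j0] conjI allI impI j0d)
    fix j assume j: "j < d"
    show "T (p-1) j = n \<longleftrightarrow> j0 \<le> j"
    proof
      assume "T (p-1) j = n"
      then have "P j" using j by (simp add: P_def)
      then show "j0 \<le> j" unfolding j0_def by (rule Least_le[where P=P])
    next
      assume a: "j0 \<le> j"
      then have "j0 < d" using j by simp
      then have t0: "T (p-1) j0 = n" using Pj0 by (simp add: P_def)
      have "T (p-1) j0 \<le> T (p-1) j" using row_mono[OF ss _ a j] pp by simp
      moreover have "T (p-1) j \<le> n" using ss j pp unfolding semistandard_def by auto
      ultimately show "T (p-1) j = n" using t0 by simp
    qed
  qed
qed

lemma semi_n_in:
  assumes ss: "semistandard p n d T" and pp: "0 < p" and j: "j < d"
  shows "T (p-1) j = n \<longleftrightarrow> n \<in> col_set p T j"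
proof
  assume "T (p-1) j = n" then show "n \<in> col_set p T j" using pp unfolding col_set_def by force
next
  assume "n \<in> col_set p T j"
  then obtain i where "i < p" "T i j = n" unfolding col_set_def by auto
  then show "T (p-1) j = n" using semi_n_bottom[OF ss _ j] by metis
qed

lemma sorted_Suc:
  assumes "finite X"
  shows "sorted_list_of_set (Suc ` X) = map Suc (sorted_list_of_set X)"
proof -
  let ?xs = "sorted_list_of_set X"
  have "sorted_wrt (<) ?xs" using assms by simp
  then have "sorted_wrt (<) (map Suc ?xs)" by (simp add: sorted_wrt_map)
  moreover have "set (map Suc ?xs) = Suc ` X" using assms by simp
  moreover have "length (map Suc ?xs) = card (Suc ` X)" using assms by (simp add: card_image)
  ultimately show ?thesis using assms by (subst sorted_list_of_set_unique[symmetric]) auto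
qed

lemma compl_Suc: "X \<subseteq> {0..<n} \<Longrightarrow> {1..n} - Suc ` X = Suc ` ({0..<n} - X)"
proof (intro equalityI subsetI)
  fix y assume X: "X \<subseteq> {0..<n}" and y: "y \<in> {1..n} - Suc ` X"
  then have y1: "1 \<le> y" "y \<le> n" "y \<notin> Suc ` X" by auto
  then have "y = Suc (y - 1)" by simp
  moreover have "y - 1 \<notin> X"
  proof
    assume "y - 1 \<in> X"
    then have "Suc (y - 1) \<in> Suc ` X" by blast
    then show False using y1 \<open>y = Suc (y - 1)\<close> by simp
  qed
  moreover have "y - 1 < n" using y1 by simp
  ultimately show "y \<in> Suc ` ({0..<n} - X)" by (metis Diff_iff atLeastLessThan_iff image_eqI zero_le)
qed auto

lemma card_le_compl:
  fixes X :: "nat set"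
  assumes "X \<subseteq> {1..n}"
  shows "card {y \<in> {1..n} - X. y \<le> x} = card {y \<in> {1..n}. y \<le> x} - card {y \<in> X. y \<le> x}"
proof -
  have "{y \<in> {1..n} - X. y \<le> x} = {y \<in> {1..n}. y \<le> x} - {y \<in> X. y \<le> x}" by auto
  moreover have "{y \<in> X. y \<le> x} \<subseteq> {y \<in> {1..n}. y \<le> x}" using assms by auto
  moreover have "finite {y \<in> X. y \<le> x}" using assms by (auto intro: finite_subset)
  ultimately show ?thesis by (simp add: card_Diff_subset)
qed

lemma dom_fwd:
  fixes a b :: "nat \<Rightarrow> nat"
  assumes "\<forall>i<q. a i \<le> b i"
  shows "card {i \<in> {..<q}. b i \<le> x} \<le> card {i \<in> {..<q}. a i \<le> x}"
  by (rule card_mono) (use assms in \<open>auto intro: le_trans\<close>)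

lemma dom_rev:
  fixes u v :: "nat \<Rightarrow> nat"
  assumes su: "\<forall>i j. i < j \<longrightarrow> j < q \<longrightarrow> u i < u j" and sv: "\<forall>i j. i < j \<longrightarrow> j < q \<longrightarrow> v i < v j"
    and c: "\<forall>x. card {i \<in> {..<q}. v i \<le> x} \<le> card {i \<in> {..<q}. u i \<le> x}"
    and i: "i < q"
  shows "u i \<le> v i"
proof (rule ccontr)
  assume "\<not> u i \<le> v i"
  then have lt: "v i < u i" by simp
  have "{0..i} \<subseteq> {i' \<in> {..<q}. v i' \<le> v i}"
  proof
    fix i' assume "i' \<in> {0..i}"
    then show "i' \<in> {i' \<in> {..<q}. v i' \<le> v i}" using sv i by (cases "i' = i") (auto intro: less_imp_le)
  qed
  then have "Suc i \<le> card {i' \<in> {..<q}. v i' \<le> v i}"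
    using card_mono[of "{i' \<in> {..<q}. v i' \<le> v i}" "{0..i}"] by simp
  moreover have "{i' \<in> {..<q}. u i' \<le> v i} \<subseteq> {0..<i}"
  proof
    fix i' assume a: "i' \<in> {i' \<in> {..<q}. u i' \<le> v i}"
    show "i' \<in> {0..<i}"
    proof (rule ccontr)
      assume "i' \<notin> {0..<i}"
      then have "i \<le> i'" by simp
      then have "u i \<le> u i'" using su a by (cases "i = i'") (auto intro: less_imp_le)
      then show False using a lt by simp
    qed
  qed
  then have "card {i' \<in> {..<q}. u i' \<le> v i} \<le> i"
    using card_mono[of "{0..<i}" "{i' \<in> {..<q}. u i' \<le> v i}"] by simp
  ultimately show False using c[rule_format, of "v i"] by simp
qed


lemma sorted_nth_facts:
  fixes Y :: "nat set"
  assumes "finite Y"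
  shows "\<forall>i j. i < j \<longrightarrow> j < card Y \<longrightarrow> sorted_list_of_set Y ! i < sorted_list_of_set Y ! j"
    and "(\<lambda>i. sorted_list_of_set Y ! i) ` {..<card Y} = Y"
proof -
  let ?xs = "sorted_list_of_set Y"
  have sw: "sorted_wrt (<) ?xs" using assms by simp
  have len: "length ?xs = card Y" using assms by simp
  show "\<forall>i j. i < j \<longrightarrow> j < card Y \<longrightarrow> ?xs ! i < ?xs ! j"
    using sw len by (auto simp: sorted_wrt_iff_nth_less)
  have "set ?xs = Y" using assms by simp
  then show "(\<lambda>i. ?xs ! i) ` {..<card Y} = Y" using len by (auto simp: set_conv_nth)
qed

context
  fixes k n d :: nat and m :: "nat \<Rightarrow> nat \<Rightarrow> nat"
  assumes k1: "1 \<le> k" and kn: "k < n" and ss: "semistandard k n d m"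
begin

definition Yc :: "nat \<Rightarrow> nat set" where "Yc j = {1..n} - col_set k m (d-1-j)"

lemma Yc_card: "j < d \<Longrightarrow> card (Yc j) = n - k"
proof -
  assume j: "j < d"
  have "d - 1 - j < d" using j by simp
  note sf = semi_facts[OF ss this]
  have "card (Yc j) = card {1..n} - card (col_set k m (d-1-j))"
    unfolding Yc_def by (rule card_Diff_subset) (use sf in \<open>auto intro: finite_subset\<close>)
  then show ?thesis using sf by simp
qed

lemma Yc_sub: "Yc j \<subseteq> {1..n}" by (auto simp: Yc_def)
lemma Yc_fin: "finite (Yc j)" using Yc_sub by (rule finite_subset) simp

lemma phi_val: "i < n - k \<Longrightarrow> j < d \<Longrightarrow> phi k n d m i j = sorted_list_of_set (Yc j) ! i"
  by (simp add: phi_def Yc_def)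

lemma phi_col: "j < d \<Longrightarrow> col_set (n-k) (phi k n d m) j = Yc j"
proof -
  assume j: "j < d"
  have "col_set (n-k) (phi k n d m) j = (\<lambda>i. sorted_list_of_set (Yc j) ! i) ` {..<n-k}"
    unfolding col_set_img using phi_val j by simp
  then show ?thesis using sorted_nth_facts(2)[OF Yc_fin, of j] Yc_card[OF j] by simp
qed

lemma phi_semi: "semistandard (n-k) n d (phi k n d m)"
  unfolding semistandard_def
proof (intro conjI allI impI)
  fix i j assume i: "i < n - k" and j: "j < d"
  have "phi k n d m i j \<in> Yc j" using phi_col[OF j] i unfolding col_set_def by auto
  then show "phi k n d m i j \<in> {1..n}" using Yc_sub[of j] by blast
next
  fix i j assume i: "i + 1 < n - k" and j: "j < d"
  show "phi k n d m i j < phi k n d m (i+1) j"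
    using sorted_nth_facts(1)[OF Yc_fin, of j] Yc_card[OF j] i j phi_val by simp
next
  fix i j assume i: "i < n - k" and j: "j + 1 < d"
  let ?u = "\<lambda>i. sorted_list_of_set (Yc j) ! i" and ?v = "\<lambda>i. sorted_list_of_set (Yc (j+1)) ! i"
  have jd: "j < d" "d - 1 - j < d" "d - 1 - (j+1) < d" "d - 1 - (j+1) + 1 = d - 1 - j" using j by auto
  let ?a = "\<lambda>i. m i (d-1-(j+1))" and ?b = "\<lambda>i. m i (d-1-j)"
  have ab: "\<forall>i<k. ?a i \<le> ?b i"
  proof (intro allI impI)
    fix i assume "i < k"
    moreover have "d - 1 - (j+1) + 1 < d" using jd by simp
    ultimately have "m i (d-1-(j+1)) \<le> m i (d-1-(j+1)+1)" using ss unfolding semistandard_def by blast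
    then show "?a i \<le> ?b i" using jd(4) by simp
  qed
  have fa: "card {i \<in> {..<k}. ?b i \<le> x} \<le> card {i \<in> {..<k}. ?a i \<le> x}" for x by (rule dom_fwd[OF ab])
  have ia: "inj_on ?a {..<k}" by (rule strict_inj_on) (use col_strict_mono[OF semi_facts(2)[OF ss jd(3)]] in auto)
  have ib: "inj_on ?b {..<k}" by (rule strict_inj_on) (use col_strict_mono[OF semi_facts(2)[OF ss jd(2)]] in auto)
  have ca: "col_set k m (d-1-(j+1)) = ?a ` {..<k}" by (simp add: col_set_img)
  have cb: "col_set k m (d-1-j) = ?b ` {..<k}" by (simp add: col_set_img)
  have fa': "card {y \<in> col_set k m (d-1-j). y \<le> x} \<le> card {y \<in> col_set k m (d-1-(j+1)). y \<le> x}" for x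
    unfolding ca cb card_img_filter[OF ia] card_img_filter[OF ib] by (rule fa)
  have cnt: "card {y \<in> Yc (j+1). y \<le> x} \<le> card {y \<in> Yc j. y \<le> x}" for x
  proof -
    have s1: "col_set k m (d-1-(j+1)) \<subseteq> {1..n}" "col_set k m (d-1-j) \<subseteq> {1..n}"
      using semi_facts(1)[OF ss] jd by auto
    have l1: "card {y \<in> col_set k m (d-1-(j+1)). y \<le> x} \<le> card {y \<in> {1..n}. y \<le> x}"
      by (rule card_mono) (use s1 in auto)
    show ?thesis unfolding Yc_def card_le_compl[OF s1(1)] card_le_compl[OF s1(2)]
      using fa'[of x] l1 by linarith
  qed
  have iu: "inj_on ?u {..<n-k}" by (rule strict_inj_on) (use sorted_nth_facts(1)[OF Yc_fin, of j] Yc_card[OF jd(1)] in auto)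
  have iv: "inj_on ?v {..<n-k}" by (rule strict_inj_on) (use sorted_nth_facts(1)[OF Yc_fin, of "j+1"] Yc_card[of "j+1"] j in auto)
  have Yu: "Yc j = ?u ` {..<n-k}" using sorted_nth_facts(2)[OF Yc_fin, of j] Yc_card[OF jd(1)] by simp
  have Yv: "Yc (j+1) = ?v ` {..<n-k}" using sorted_nth_facts(2)[OF Yc_fin, of "j+1"] Yc_card[of "j+1"] j by simp
  have c2: "\<forall>x. card {i \<in> {..<n-k}. ?v i \<le> x} \<le> card {i \<in> {..<n-k}. ?u i \<le> x}"
  proof
    fix x
    have e1: "card {y \<in> ?u ` {..<n-k}. y \<le> x} = card {i \<in> {..<n-k}. ?u i \<le> x}"
      by (rule card_img_filter[OF iu])
    have e2: "card {y \<in> ?v ` {..<n-k}. y \<le> x} = card {i \<in> {..<n-k}. ?v i \<le> x}"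
      by (rule card_img_filter[OF iv])
    show "card {i \<in> {..<n-k}. ?v i \<le> x} \<le> card {i \<in> {..<n-k}. ?u i \<le> x}"
      using cnt[of x] e1 e2 unfolding Yu[symmetric] Yv[symmetric] by simp
  qed
  have "?u i \<le> ?v i"
    by (rule dom_rev[OF _ _ c2 i]) (use sorted_nth_facts(1)[OF Yc_fin] Yc_card jd j in auto)
  then show "phi k n d m i j \<le> phi k n d m i (j+1)" using phi_val i j by simp
qed


lemma phi_bottom:
  assumes j0: "\<forall>j<d. (m (k-1) j = n \<longleftrightarrow> j0 \<le> j)" and j0d: "j0 \<le> d"
  shows "\<forall>j<d. (phi k n d m (n-k-1) j = n \<longleftrightarrow> d - j0 \<le> j)"
proof (intro allI impI)
  fix j assume j: "j < d"
  have nk: "0 < n - k" using kn by simp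
  have jj: "d - 1 - j < d" using j by simp
  have "phi k n d m (n-k-1) j = n \<longleftrightarrow> n \<in> col_set (n-k) (phi k n d m) j"
    using semi_n_in[OF phi_semi nk j] by simp
  also have "\<dots> \<longleftrightarrow> n \<notin> col_set k m (d-1-j)" using phi_col[OF j] kn by (simp add: Yc_def)
  also have "\<dots> \<longleftrightarrow> \<not> m (k-1) (d-1-j) = n" using semi_n_in[OF ss _ jj] k1 by simp
  also have "\<dots> \<longleftrightarrow> d - j0 \<le> j" using j0 jj j j0d by auto
  finally show "phi k n d m (n-k-1) j = n \<longleftrightarrow> d - j0 \<le> j" .
qed

definition rl :: "nat \<Rightarrow> nat" where "rl x = (if x = n then 0 else x)"

lemma col_T0: "j < d \<Longrightarrow> col_set p (T0of p n d T) j = rl ` col_set p T j"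
  unfolding col_set_img image_image by (rule image_cong) (auto simp: T0of_def rl_def)

lemma rl_img: "rl ` {1..n} = {0..<n}"
proof (intro equalityI subsetI)
  fix y assume "y \<in> rl ` {1..n}" then show "y \<in> {0..<n}" using kn by (auto simp: rl_def)
next
  fix y assume y: "y \<in> {0..<n}"
  show "y \<in> rl ` {1..n}"
  proof (cases "y = 0")
    case True
    then have "rl n = y" by (simp add: rl_def)
    moreover have "n \<in> {1..n}" using kn by simp
    ultimately show ?thesis by (metis image_eqI)
  next
    case False
    then have "rl y = y" using y by (simp add: rl_def)
    moreover have "y \<in> {1..n}" using y False by simp
    ultimately show ?thesis by (metis image_eqI)
  qed
qed

lemma rl_inj: "inj_on rl {1..n}"
  by (rule inj_onI) (auto simp: rl_def split: if_splits)

lemma Rel_init: "Rel n d (col_set k (T0of k n d m)) (col_set (n-k) (T0of (n-k) n d (phi k n d m)))"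
  unfolding Rel_def
proof (intro allI impI conjI)
  fix j assume j: "j < d"
  have s1: "col_set k m j \<subseteq> {1..n}" using semi_facts(1)[OF ss j] .
  show "col_set k (T0of k n d m) j \<subseteq> {0..<n}" unfolding col_T0[OF j] using s1 rl_img by auto
  have jj: "d - 1 - j < d" using j by simp
  have s2: "col_set k m (d-1-j) \<subseteq> {1..n}" using semi_facts(1)[OF ss jj] .
  have "col_set (n-k) (T0of (n-k) n d (phi k n d m)) j = rl ` ({1..n} - col_set k m (d-1-j))"
    unfolding col_T0[OF j] phi_col[OF j] Yc_def ..
  also have "\<dots> = rl ` {1..n} - rl ` col_set k m (d-1-j)"
    by (rule inj_on_image_set_diff[OF rl_inj]) (use s2 in auto)
  also have "\<dots> = {0..<n} - col_set k (T0of k n d m) (d-1-j)" unfolding rl_img col_T0[OF jj] ..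
  finally show "col_set (n-k) (T0of (n-k) n d (phi k n d m)) j = {0..<n} - col_set k (T0of k n d m) (d-1-j)" .
qed

lemma words:
  assumes "j0 \<le> d"
  shows "map (\<lambda>c. d - c) (Tw j0 (d - j0)) = rowmaj (d - j0) j0 (d - j0)"
    and "Tw (d - j0) j0 = colmaj (d - j0) j0 (d - j0)"
    and "\<forall>c\<in>set (Tw j0 (d - j0)). 1 \<le> c \<and> c < d"
proof -
  have inner1: "map (\<lambda>c. d - c) (map (\<lambda>u. j0+t-u) [0..<j0]) = map (\<lambda>u. (d - j0) - t + u) [0..<j0]"
    if "t \<in> set [0..<d - j0]" for t
    by (rule nth_equalityI) (use that assms in auto)
  have "map (\<lambda>c. d - c) (Tw j0 (d - j0)) = concat (map (\<lambda>t. map (\<lambda>c. d - c) (map (\<lambda>u. j0+t-u) [0..<j0])) [0..<d - j0])"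
    unfolding Tw_def map_concat by (simp add: comp_def)
  also have "\<dots> = concat (map (\<lambda>t. map (\<lambda>u. (d - j0) - t + u) [0..<j0]) [0..<d - j0])"
    by (rule arg_cong[where f=concat], rule map_cong[OF refl]) (rule inner1)
  finally show "map (\<lambda>c. d - c) (Tw j0 (d - j0)) = rowmaj (d - j0) j0 (d - j0)"
    unfolding rowmaj_def .
  have inner2: "map (\<lambda>u. (d - j0) + t - u) [0..<d - j0] = map (\<lambda>u. (d - j0) - u + t) [0..<d - j0]"
    for t by (rule nth_equalityI) auto
  show "Tw (d - j0) j0 = colmaj (d - j0) j0 (d - j0)"
    unfolding Tw_def colmaj_def
    by (rule arg_cong[where f=concat], rule map_cong[OF refl]) (rule inner2)
  show "\<forall>c\<in>set (Tw j0 (d - j0)). 1 \<le> c \<and> c < d" unfolding Tw_def using assms by auto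
qed


lemma main_eq: "phi k n d (prom k n d m) = prom (n-k) n d (phi k n d m)"
proof -
  have kp: "0 < k" using k1 by simp
  have nk: "0 < n - k" using kn by simp
  have n0: "0 < n" using kn by simp
  obtain j0 where j0d: "j0 \<le> d" and j0: "\<forall>j<d. (m (k-1) j = n \<longleftrightarrow> j0 \<le> j)"
    using exists_j0[OF ss kp] by blast
  let ?m' = "phi k n d m"
  let ?r = "d - j0"
  have ss': "semistandard (n-k) n d ?m'" by (rule phi_semi)
  have j0': "\<forall>j<d. (?m' (n-k-1) j = n \<longleftrightarrow> ?r \<le> j)" by (rule phi_bottom[OF j0 j0d])
  obtain F where F1: "prom k n d m = (\<lambda>i j. if i < k \<and> j < d then F i j + 1 else 0)"
    and F2: "\<forall>i<k. \<forall>j<d. F i j = sorted_list_of_set (col_set k F j) ! i"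
    and F3: "col_set k F = run (Tw j0 ?r) (col_set k (T0of k n d m))"
    and F4: "\<forall>j<d. card (col_set k F j) = k \<and> col_set k F j \<subseteq> {0..<n}"
    using prom_result[OF ss kp j0 j0d] by blast
  have rd: "?r \<le> d" by simp
  obtain G where G1: "prom (n-k) n d ?m' = (\<lambda>i j. if i < n-k \<and> j < d then G i j + 1 else 0)"
    and G2: "\<forall>i<n-k. \<forall>j<d. G i j = sorted_list_of_set (col_set (n-k) G j) ! i"
    and G3: "col_set (n-k) G = run (Tw ?r (d - ?r)) (col_set (n-k) (T0of (n-k) n d ?m'))"
    and G4: "\<forall>j<d. card (col_set (n-k) G j) = n-k \<and> col_set (n-k) G j \<subseteq> {0..<n}"
    using prom_result[OF ss' nk j0' rd] by blast
  have dr: "d - ?r = j0" using j0d by simp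
  note W = words[OF j0d]
  have R1: "Rel n d (run (Tw j0 ?r) (col_set k (T0of k n d m)))
                    (run (map (\<lambda>c. d - c) (Tw j0 ?r)) (col_set (n-k) (T0of (n-k) n d ?m')))"
    by (rule Rel_run[OF Rel_init W(3) n0])
  have "col_set (n-k) G = run (colmaj ?r j0 ?r) (col_set (n-k) (T0of (n-k) n d ?m'))"
    using G3 W(2) dr by simp
  also have "\<dots> = run (rowmaj ?r j0 ?r) (col_set (n-k) (T0of (n-k) n d ?m'))"
    by (rule grid_reorder) simp
  also have "\<dots> = run (map (\<lambda>c. d - c) (Tw j0 ?r)) (col_set (n-k) (T0of (n-k) n d ?m'))"
    using W(1) by simp
  finally have GG: "col_set (n-k) G = run (map (\<lambda>c. d - c) (Tw j0 ?r)) (col_set (n-k) (T0of (n-k) n d ?m'))" .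
  have R: "Rel n d (col_set k F) (col_set (n-k) G)" using R1 F3 GG by simp
  show ?thesis
  proof (intro ext)
    fix i j
    show "phi k n d (prom k n d m) i j = prom (n-k) n d ?m' i j"
    proof (cases "i < n - k \<and> j < d")
      case False
      then show ?thesis unfolding G1 by (auto simp: phi_def)
    next
      case True
      then have i: "i < n - k" and j: "j < d" by auto
      have jj: "d - 1 - j < d" using j by simp
      have cp: "col_set k (prom k n d m) (d-1-j) = Suc ` col_set k F (d-1-j)"
        unfolding F1 col_set_img using jj by auto
      have sub: "col_set k F (d-1-j) \<subseteq> {0..<n}" using F4 jj by blast
      have Gj: "col_set (n-k) G j = {0..<n} - col_set k F (d-1-j)" using R j unfolding Rel_def by blast
      have cardG: "card (col_set (n-k) G j) = n - k" using G4 j by blast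
      have "phi k n d (prom k n d m) i j = sorted_list_of_set ({1..n} - col_set k (prom k n d m) (d-1-j)) ! i"
        using i j by (simp add: phi_def)
      also have "\<dots> = sorted_list_of_set (Suc ` ({0..<n} - col_set k F (d-1-j))) ! i"
        unfolding cp compl_Suc[OF sub] ..
      also have "\<dots> = Suc (sorted_list_of_set ({0..<n} - col_set k F (d-1-j)) ! i)"
        using i cardG Gj by (simp add: sorted_Suc)
      also have "\<dots> = Suc (G i j)" using G2 i j Gj by simp
      also have "\<dots> = prom (n-k) n d ?m' i j" unfolding G1 using i j by simp
      finally show ?thesis .
    qed
  qed
qed

end

theorem lemma6p3:
  fixes k n d :: nat and m :: "nat \<Rightarrow> nat \<Rightarrow> nat"
  assumes "1 \<le> k" and "k < n" and "1 \<le> d"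
    and "semistandard k n d m"
  shows "phi k n d (prom k n d m) = prom (n - k) n d (phi k n d m)"
  using main_eq[OF assms(1,2,4)] .



end
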